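(* For any $\lambda>0$ there exist $\delta_0>0$ and $n_0$ such that, for any $\delta<\delta_0$ and $n\ge n_0$, a (suitably parametrized) version of the \textsc{Approximate Best Arm} algorithm $(\epsilon,\delta)$-learns a best arm among any $n$ arms, with sample complexity at most $\big(2+\lambda\big)\frac{n}{\epsilon^2}\log\frac{1}{\delta}$.
   Context: Setting: a set of $n$ arms; each arm $a$ has an unknown distribution supported on $[0,1]$ with mean $\mu(a)$; sampling returns an independent draw. $a^\star\in\arg\max_a\mu(a)$; an $\epsilon$-best arm is an arm $a$ with $\mu(a)\ge\mu(a^\star)-\epsilon$. An algorithm $(\epsilon,\delta)$-learns a best arm if on every such instance it outputs an $\epsilon$-best arm with probability at least $1-\delta$; its sample complexity is the worst-case total number of samples taken (integer rounding ignored). $\log$ is natural. The \textsc{Approximate Best Arm} algorithm with parameter $\alpha\in(0,1)$: choose a uniformly random set $R$ of $\frac{n^{7/8}}{2}$ arms; run an elimination procedure that repeatedly samples all surviving arms (in round $i=0,1,\ldots$ each arm $(i+1)\lceil\frac{2}{(\alpha\epsilon)^2}\log\frac{1}{\delta'}\rceil$ times, $\delta'$ a confidence parameter) and keeps only a $(\delta'+\phi)$-fraction of arms with largest empirical means until about $\frac{n^{3/4}}{2}$ arms $A_T$ remain (here $\phi$ is a vanishing function of $n$); then sample each arm of $A_T\cup R$ $\frac{2}{((1-\alpha)\epsilon)^2}\log\frac{|A_T\cup R|}{\delta''}$ times and output the one with largest empirical mean. The parameters $\alpha,\delta',\delta'',\phi$ may be chosen depending on $n$, $\delta$ and $\lambda$.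 *)

theory Defs
  imports "HOL-Probability.Probability"
begin

definition bandit_instance :: "nat \<Rightarrow> (nat \<Rightarrow> real measure) \<Rightarrow> bool" where
  "bandit_instance n D \<longleftrightarrow>
     (\<forall>a<n. prob_space (D a) \<and> sets (D a) = sets borel \<and> (AE x in D a. 0 \<le> x \<and> x \<le> 1))"

definition arm_mean :: "(nat \<Rightarrow> real measure) \<Rightarrow> nat \<Rightarrow> real" where
  "arm_mean D a = integral\<^sup>L (D a) (\<lambda>x. x)"

definition best_mean :: "nat \<Rightarrow> (nat \<Rightarrow> real measure) \<Rightarrow> real" where
  "best_mean n D = Max (arm_mean D ` {..<n})"

text \<open>Randomness: a uniformly random set R of floor(n^(7/8)/2) arms, and a table X of samples,
  X (a,k) being the k-th sample of arm a; all samples are independent, X (a,k) distributed as D a.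
  Every round and the final stage use fresh samples (a global offset into the table).\<close>

definition rand_set_size :: "nat \<Rightarrow> nat" where
  "rand_set_size n = nat \<lfloor>real n powr (7/8) / 2\<rfloor>"

definition rand_sets :: "nat \<Rightarrow> nat set set" where
  "rand_sets n = {R. R \<subseteq> {..<n} \<and> card R = rand_set_size n}"

text \<open>k arms of S with the largest values of f (ties broken towards smaller index).\<close>
definition top_k :: "nat \<Rightarrow> (nat \<Rightarrow> real) \<Rightarrow> nat set \<Rightarrow> nat set" where
  "top_k k f S = set (take k (sort_key (\<lambda>a. - f a) (sorted_list_of_set S)))"

definition round_size :: "nat \<Rightarrow> real \<Rightarrow> nat \<Rightarrow> nat" where
  "round_size n p i = ((\<lambda>m. nat \<lfloor>p * real m\<rfloor>) ^^ i) n"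

definition num_rounds :: "nat \<Rightarrow> real \<Rightarrow> nat" where
  "num_rounds n p = (LEAST i. real (round_size n p i) \<le> real n powr (3/4) / 2)"

definition round_samples :: "real \<Rightarrow> real \<Rightarrow> real \<Rightarrow> nat \<Rightarrow> nat" where
  "round_samples \<alpha> \<delta>' \<epsilon> i = (i + 1) * nat \<lceil>2 / (\<alpha> * \<epsilon>)\<^sup>2 * ln (1 / \<delta>')\<rceil>"

definition round_offset :: "real \<Rightarrow> real \<Rightarrow> real \<Rightarrow> nat \<Rightarrow> nat" where
  "round_offset \<alpha> \<delta>' \<epsilon> i = (\<Sum>j<i. round_samples \<alpha> \<delta>' \<epsilon> j)"

definition emp_mean :: "(nat \<times> nat \<Rightarrow> real) \<Rightarrow> nat \<Rightarrow> nat \<Rightarrow> nat \<Rightarrow> real" where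
  "emp_mean X off m a = (\<Sum>k<m. X (a, off + k)) / real m"

fun surv :: "nat \<Rightarrow> real \<Rightarrow> real \<Rightarrow> real \<Rightarrow> real \<Rightarrow> (nat \<times> nat \<Rightarrow> real) \<Rightarrow> nat \<Rightarrow> nat set" where
  "surv n \<alpha> \<delta>' \<phi> \<epsilon> X 0 = {..<n}"
| "surv n \<alpha> \<delta>' \<phi> \<epsilon> X (Suc i) =
     top_k (round_size n (\<delta>' + \<phi>) (Suc i))
       (emp_mean X (round_offset \<alpha> \<delta>' \<epsilon> i) (round_samples \<alpha> \<delta>' \<epsilon> i))
       (surv n \<alpha> \<delta>' \<phi> \<epsilon> X i)"

definition final_set :: "nat \<Rightarrow> real \<Rightarrow> real \<Rightarrow> real \<Rightarrow> real \<Rightarrow> nat set \<Rightarrow> (nat \<times> nat \<Rightarrow> real) \<Rightarrow> nat set" where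
  "final_set n \<alpha> \<delta>' \<phi> \<epsilon> R X = surv n \<alpha> \<delta>' \<phi> \<epsilon> X (num_rounds n (\<delta>' + \<phi>)) \<union> R"

definition final_samples :: "real \<Rightarrow> real \<Rightarrow> real \<Rightarrow> nat \<Rightarrow> nat" where
  "final_samples \<alpha> \<delta>'' \<epsilon> s = nat \<lceil>2 / ((1 - \<alpha>) * \<epsilon>)\<^sup>2 * ln (real s / \<delta>'')\<rceil>"

definition aba_output ::
  "nat \<Rightarrow> real \<Rightarrow> real \<Rightarrow> real \<Rightarrow> real \<Rightarrow> real \<Rightarrow> nat set \<Rightarrow> (nat \<times> nat \<Rightarrow> real) \<Rightarrow> nat" where
  "aba_output n \<alpha> \<delta>' \<delta>'' \<phi> \<epsilon> R X =
     (let U = final_set n \<alpha> \<delta>' \<phi> \<epsilon> R X;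
          off = round_offset \<alpha> \<delta>' \<epsilon> (num_rounds n (\<delta>' + \<phi>));
          m = final_samples \<alpha> \<delta>'' \<epsilon> (card U)
      in hd (sort_key (\<lambda>a. - emp_mean X off m a) (sorted_list_of_set U)))"

definition aba_samples ::
  "nat \<Rightarrow> real \<Rightarrow> real \<Rightarrow> real \<Rightarrow> real \<Rightarrow> real \<Rightarrow> nat set \<Rightarrow> (nat \<times> nat \<Rightarrow> real) \<Rightarrow> nat" where
  "aba_samples n \<alpha> \<delta>' \<delta>'' \<phi> \<epsilon> R X =
     (let T = num_rounds n (\<delta>' + \<phi>); U = final_set n \<alpha> \<delta>' \<phi> \<epsilon> R X
      in (\<Sum>i<T. card (surv n \<alpha> \<delta>' \<phi> \<epsilon> X i) * round_samples \<alpha> \<delta>' \<epsilon> i)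
         + card U * final_samples \<alpha> \<delta>'' \<epsilon> (card U))"

definition aba_space :: "nat \<Rightarrow> (nat \<Rightarrow> real measure) \<Rightarrow> (nat set \<times> (nat \<times> nat \<Rightarrow> real)) measure" where
  "aba_space n D = measure_pmf (pmf_of_set (rand_sets n)) \<Otimes>\<^sub>M
                   PiM ({..<n} \<times> UNIV) (\<lambda>(a, k). D a)"

definition aba_learns ::
  "nat \<Rightarrow> real \<Rightarrow> real \<Rightarrow> real \<Rightarrow> real \<Rightarrow> real \<Rightarrow> real \<Rightarrow> (nat \<Rightarrow> real measure) \<Rightarrow> bool" where
  "aba_learns n \<alpha> \<delta>' \<delta>'' \<phi> \<epsilon> \<delta> D \<longleftrightarrow>
     measure (aba_space n D)
       {\<omega> \<in> space (aba_space n D).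
          arm_mean D (aba_output n \<alpha> \<delta>' \<delta>'' \<phi> \<epsilon> (fst \<omega>) (snd \<omega>)) \<ge> best_mean n D - \<epsilon>}
     \<ge> 1 - \<delta>"

end

theory Submission
  imports Defs "HOL-Real_Asymp.Real_Asymp"
begin

lemma top_k_subset: "finite S \<Longrightarrow> top_k K f S \<subseteq> S"
  unfolding top_k_def by (auto dest: in_set_takeD)

lemma card_top_k: "finite S \<Longrightarrow> card (top_k K f S) = min K (card S)"
  unfolding top_k_def
  by (subst distinct_card) (auto simp: distinct_sort)

lemma top_k_ge:
  assumes "finite S" "a \<in> S" "a \<notin> top_k K f S" "b \<in> top_k K f S"
  shows "f a \<le> f b"
proof -
  define ys where "ys = sort_key (\<lambda>a. - f a) (sorted_list_of_set S)"
  have s: "sorted (map (\<lambda>a. - f a) ys)" unfolding ys_def by (rule sorted_sort_key)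
  have "ys = take K ys @ drop K ys" by simp
  with s have s2: "sorted (map (\<lambda>a. - f a) (take K ys) @ map (\<lambda>a. - f a) (drop K ys))"
    by (metis map_append)
  have a: "a \<in> set (drop K ys)"
    using assms unfolding top_k_def ys_def[symmetric]
    by (metis Un_iff \<open>ys = take K ys @ drop K ys\<close> set_append set_sorted_list_of_set ys_def set_sort)
  have b: "b \<in> set (take K ys)" using assms(4) unfolding top_k_def ys_def by simp
  from s2 a b show ?thesis unfolding sorted_append by fastforce
qed

lemma hd_sort_key_max:
  fixes f :: "nat \<Rightarrow> real"
  assumes "finite U" "U \<noteq> {}"
  shows "hd (sort_key (\<lambda>a. - f a) (sorted_list_of_set U)) \<in> U"
    "\<And>b. b \<in> U \<Longrightarrow> f b \<le> f (hd (sort_key (\<lambda>a. - f a) (sorted_list_of_set U)))"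
proof -
  define ys where "ys = sort_key (\<lambda>a. - f a) (sorted_list_of_set U)"
  have s: "sorted (map (\<lambda>a. - f a) ys)" unfolding ys_def by (rule sorted_sort_key)
  have set: "set ys = U" using assms unfolding ys_def by simp
  then have ne: "ys \<noteq> []" using assms by auto
  then obtain y zs where yz: "ys = y # zs" by (cases ys) auto
  show "hd (sort_key (\<lambda>a. - f a) (sorted_list_of_set U)) \<in> U" using set yz ys_def by auto
  fix b assume "b \<in> U"
  then have "b = y \<or> b \<in> set zs" using set yz by auto
  with s show "f b \<le> f (hd (sort_key (\<lambda>a. - f a) (sorted_list_of_set U)))"
    unfolding ys_def[symmetric] yz by auto
qed

lemma round_size_0[simp]: "round_size n p 0 = n"
  by (simp add: round_size_def)

lemma round_size_Suc: "round_size n p (Suc i) = nat \<lfloor>p * real (round_size n p i)\<rfloor>"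
  by (simp add: round_size_def)

lemma round_size_mono_step:
  assumes "0 \<le> p" "p \<le> 1"
  shows "round_size n p (Suc i) \<le> round_size n p i"
proof -
  have "p * real (round_size n p i) \<le> real (round_size n p i)"
    using assms by (simp add: mult_left_le_one_le)
  then have "\<lfloor>p * real (round_size n p i)\<rfloor> \<le> int (round_size n p i)"
    by (metis floor_mono floor_of_nat)
  then show ?thesis unfolding round_size_Suc by linarith
qed

lemma round_size_antimono:
  assumes "0 \<le> p" "p \<le> 1" "i \<le> j"
  shows "round_size n p j \<le> round_size n p i"
  using assms(3)
proof (induction j)
  case 0 then show ?case by simp
next
  case (Suc j)
  then show ?case
    using round_size_mono_step[OF assms(1,2), of n j] le_Suc_eq by fastforce
qed

lemma round_size_upper:
  assumes "0 \<le> p"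
  shows "real (round_size n p i) \<le> p ^ i * real n"
proof (induction i)
  case 0 then show ?case by simp
next
  case (Suc i)
  have "real (round_size n p (Suc i)) \<le> p * real (round_size n p i)"
    unfolding round_size_Suc using assms by (simp add: mult_nonneg_nonneg)
  also have "\<dots> \<le> p * (p ^ i * real n)" using Suc assms by (simp add: mult_left_mono)
  finally show ?case by simp
qed

lemma round_size_lower:
  assumes "0 \<le> p" "p \<le> 1/2"
  shows "p ^ i * real n \<le> real (round_size n p i) + 2"
proof (induction i)
  case 0 then show ?case by simp
next
  case (Suc i)
  have "p * real (round_size n p i) - 1 \<le> real (round_size n p (Suc i))"
    unfolding round_size_Suc using assms by linarith
  moreover have "p * (p ^ i * real n) \<le> p * (real (round_size n p i) + 2)"
    using Suc assms by (simp add: mult_left_mono)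
  ultimately show ?case using assms by (simp add: algebra_simps)
qed

lemma num_rounds_exists:
  assumes "0 \<le> p" "p \<le> 1/2" "n \<ge> 1"
  shows "\<exists>i. real (round_size n p i) \<le> real n powr (3/4) / 2"
proof (intro exI)
  have "real (round_size n p (Suc n)) \<le> p ^ Suc n * real n" by (rule round_size_upper) fact
  also have "\<dots> \<le> (1/2) ^ Suc n * real n"
    using assms by (intro mult_right_mono power_mono) auto
  also have "\<dots> = real n / 2 ^ Suc n" by (simp add: power_divide)
  also have "\<dots> \<le> 1 / 2"
  proof -
    have "real n < 2 ^ n" using less_exp[of n] by (metis of_nat_less_numeral_power_cancel_iff)
    then show ?thesis by (simp add: field_simps)
  qed
  also have "\<dots> \<le> real n powr (3/4) / 2"
    using assms by (simp add: ge_one_powr_ge_zero)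
  finally show "real (round_size n p (Suc n)) \<le> real n powr (3/4) / 2" .
qed

lemma num_rounds_le:
  assumes "\<exists>i. real (round_size n p i) \<le> real n powr (3/4) / 2"
  shows "real (round_size n p (num_rounds n p)) \<le> real n powr (3/4) / 2"
  unfolding num_rounds_def by (rule LeastI_ex[OF assms])

lemma num_rounds_gt:
  assumes "i < num_rounds n p"
  shows "real (round_size n p i) > real n powr (3/4) / 2"
  using not_less_Least[OF assms[unfolded num_rounds_def]] by simp

lemma num_rounds_pos:
  assumes "n \<ge> 2" "\<exists>i. real (round_size n p i) \<le> real n powr (3/4) / 2"
  shows "num_rounds n p > 0"
proof (rule ccontr)
  assume "\<not> num_rounds n p > 0"
  then have "num_rounds n p = 0" by simp
  with num_rounds_le[OF assms(2)] have "real n \<le> real n powr (3/4) / 2" by simp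
  moreover have "real n powr (3/4) \<le> real n powr 1"
    using assms by (intro powr_mono) auto
  ultimately show False using assms by simp
qed

lemma surv_props:
  assumes "0 \<le> \<delta>' + \<phi>" "\<delta>' + \<phi> \<le> 1"
  shows "surv n \<alpha> \<delta>' \<phi> \<epsilon> X i \<subseteq> {..<n} \<and> card (surv n \<alpha> \<delta>' \<phi> \<epsilon> X i) = round_size n (\<delta>' + \<phi>) i"
proof (induction i)
  case 0 then show ?case by simp
next
  case (Suc i)
  have fin: "finite (surv n \<alpha> \<delta>' \<phi> \<epsilon> X i)" using Suc finite_subset by blast
  show ?case
    using Suc fin top_k_subset[OF fin] card_top_k[OF fin]
      round_size_mono_step[OF assms, of n i]
    by (auto simp: min_def) blast
qed

definition MXs :: "nat \<Rightarrow> (nat \<Rightarrow> real measure) \<Rightarrow> (nat \<times> nat \<Rightarrow> real) measure" where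
  "MXs n D = PiM ({..<n} \<times> UNIV) (\<lambda>(a, k). D a)"

definition armM :: "nat \<Rightarrow> (nat \<Rightarrow> real measure) \<Rightarrow> nat \<times> nat \<Rightarrow> real measure" where
  "armM n D = (\<lambda>(a, k). if a < n then D a else return borel 0)"

lemma bandit_prob: "bandit_instance n D \<Longrightarrow> a < n \<Longrightarrow> prob_space (D a)"
  unfolding bandit_instance_def by blast

lemma bandit_sets: "bandit_instance n D \<Longrightarrow> a < n \<Longrightarrow> sets (D a) = sets borel"
  unfolding bandit_instance_def by blast

lemma bandit_AE: "bandit_instance n D \<Longrightarrow> a < n \<Longrightarrow> AE x in D a. 0 \<le> x \<and> x \<le> 1"
  unfolding bandit_instance_def by blast

lemma MXs_armM: "MXs n D = PiM ({..<n} \<times> UNIV) (armM n D)"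
  unfolding MXs_def armM_def by (rule PiM_cong) auto

lemma sets_armM: "bandit_instance n D \<Longrightarrow> sets (armM n D i) = sets borel"
  unfolding armM_def by (cases i) (auto simp: bandit_sets)

lemma space_armM: "bandit_instance n D \<Longrightarrow> space (armM n D i) = UNIV"
  using sets_eq_imp_space_eq[OF sets_armM] by auto

lemma prob_armM: "bandit_instance n D \<Longrightarrow> prob_space (armM n D i)"
  unfolding armM_def by (cases i) (auto simp: bandit_prob prob_space_return)

lemma prob_space_MXs: "bandit_instance n D \<Longrightarrow> prob_space (MXs n D)"
  unfolding MXs_armM by (rule prob_space_PiM) (auto intro: prob_armM)

lemma space_MXs: "bandit_instance n D \<Longrightarrow> space (MXs n D) = (\<Pi>\<^sub>E i\<in>{..<n} \<times> UNIV. UNIV)"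
  unfolding MXs_armM space_PiM by (simp add: space_armM)

lemma MXs_coord_meas_armM:
  assumes "bandit_instance n D"
  shows "(\<lambda>X. X j) \<in> measurable (MXs n D) (armM n D j)"
proof (cases "j \<in> {..<n} \<times> UNIV")
  case True
  then show ?thesis unfolding MXs_armM by (rule measurable_component_singleton)
next
  case False
  have "(\<lambda>X. X j) \<in> measurable (MXs n D) (armM n D j) \<longleftrightarrow> (\<lambda>X. undefined) \<in> measurable (MXs n D) (armM n D j)"
    by (rule measurable_cong) (use False assms in \<open>cases j; auto simp: space_MXs PiE_def extensional_def\<close>)
  then show ?thesis using assms by (simp add: space_armM)
qed

lemma MXs_coord_meas[measurable]:
  assumes "bandit_instance n D"
  shows "(\<lambda>X. X j) \<in> borel_measurable (MXs n D)"
  using MXs_coord_meas_armM[OF assms, of j] measurable_cong_sets[OF refl sets_armM[OF assms]] by blast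

lemma MXs_indep:
  assumes "bandit_instance n D" "n > 0"
  shows "prob_space.indep_vars (MXs n D) (armM n D) (\<lambda>i X. X i) ({..<n} \<times> UNIV)"
proof -
  interpret P: prob_space "MXs n D" by (rule prob_space_MXs[OF assms(1)])
  have "P.indep_vars (armM n D) (\<lambda>i X. X i) ({..<n} \<times> UNIV) \<longleftrightarrow>
    distr (MXs n D) (\<Pi>\<^sub>M i\<in>{..<n} \<times> UNIV. armM n D i) (\<lambda>x. \<lambda>i\<in>{..<n} \<times> UNIV. x i) =
    (\<Pi>\<^sub>M i\<in>{..<n} \<times> UNIV. distr (MXs n D) (armM n D i) (\<lambda>x. x i))"
  proof (rule P.indep_vars_iff_distr_eq_PiM)
    show "{..<n} \<times> UNIV \<noteq> {}" using assms by auto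
    fix i
    show "(\<lambda>x. x i) \<in> measurable (MXs n D) (armM n D i)" using MXs_coord_meas_armM[OF assms(1), of i] by simp
  qed
  moreover have "distr (MXs n D) (\<Pi>\<^sub>M i\<in>{..<n} \<times> UNIV. armM n D i) (\<lambda>x. \<lambda>i\<in>{..<n} \<times> UNIV. x i)
      = distr (MXs n D) (MXs n D) (\<lambda>x. x)"
    by (rule distr_cong) (auto simp: MXs_armM space_PiM PiE_def restrict_def extensional_def fun_eq_iff)
  moreover have "(\<Pi>\<^sub>M i\<in>{..<n} \<times> UNIV. distr (MXs n D) (armM n D i) (\<lambda>x. x i)) = MXs n D"
    unfolding MXs_armM
    by (rule PiM_cong) (auto intro!: distr_PiM_component prob_armM[OF assms(1)])
  ultimately show ?thesis by simp
qed

lemma MXs_expectation: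
  assumes "bandit_instance n D" "a < n"
  shows "prob_space.expectation (MXs n D) (\<lambda>X. X (a, k)) = arm_mean D a"
proof -
  have "distr (MXs n D) (armM n D (a, k)) (\<lambda>X. X (a, k)) = armM n D (a, k)"
    unfolding MXs_armM by (rule distr_PiM_component) (auto intro: prob_armM[OF assms(1)] assms)
  then have "integral\<^sup>L (armM n D (a, k)) (\<lambda>x. x) = integral\<^sup>L (MXs n D) (\<lambda>X. X (a, k))"
  proof -
    have "(\<lambda>x::real. x) \<in> borel_measurable (armM n D (a, k))"
      unfolding measurable_cong_sets[OF sets_armM[OF assms(1)] refl, of "(a,k)" borel] by (rule measurable_ident_sets) simp
    from integral_distr[OF MXs_coord_meas_armM[OF assms(1)] this] \<open>distr _ _ _ = _\<close>
    show ?thesis by simp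
  qed
  then show ?thesis using assms by (simp add: armM_def arm_mean_def)
qed

lemma MXs_AE:
  assumes "bandit_instance n D" "a < n"
  shows "AE X in MXs n D. X (a, k) \<in> {0..1}"
proof -
  have eq: "armM n D (a, k) = D a" using assms by (simp add: armM_def)
  have "AE x in D a. x \<in> {0..1}" using bandit_AE[OF assms] by simp
  then have "AE x in armM n D (a, k). x \<in> {0..1}" unfolding eq .
  then show ?thesis unfolding MXs_armM
    using AE_PiM_component[of "{..<n} \<times> UNIV" "armM n D" "(a,k)" "\<lambda>x. x \<in> {0..1}"] prob_armM[OF assms(1)] assms(2)
    by blast
qed

lemma sum_block:
  fixes off m :: nat and X :: "nat \<times> nat \<Rightarrow> real"
  shows
  "(\<Sum>i\<in>{a} \<times> {off..<off+m}. X i) = (\<Sum>k<m. X (a, off + k))"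
proof -
  have "{a} \<times> {off..<off+m} = Pair a ` {off..<off+m}" by auto
  then have "(\<Sum>i\<in>{a} \<times> {off..<off+m}. X i) = (\<Sum>j\<in>{off..<off+m}. X (a, j))"
    by (simp add: sum.reindex inj_on_def)
  also have "\<dots> = (\<Sum>k<m. X (a, off + k))"
    by (induction m) auto
  finally show ?thesis .
qed

lemma MXs_indep_borel:
  assumes "bandit_instance n D" "n > 0" "J \<subseteq> {..<n} \<times> UNIV"
  shows "prob_space.indep_vars (MXs n D) (\<lambda>_. borel) (\<lambda>i X. X i) J"
proof -
  interpret P: prob_space "MXs n D" by (rule prob_space_MXs[OF assms(1)])
  have "P.indep_vars (armM n D) (\<lambda>i X. X i) J"
    by (rule P.indep_vars_subset[OF MXs_indep[OF assms(1,2)] assms(3)])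
  then have "P.indep_vars (\<lambda>_. borel) (\<lambda>i X. (\<lambda>x. x) (X i)) J"
  proof (rule P.indep_vars_compose2)
    fix i
    show "(\<lambda>x::real. x) \<in> measurable (armM n D i) borel"
      unfolding measurable_cong_sets[OF sets_armM[OF assms(1)] refl, of i borel]
      by (rule measurable_ident_sets) simp
  qed
  then show ?thesis by simp
qed

lemma hoeffding_MXs:
  assumes B: "bandit_instance n D" and a: "a < n" and m: "m > 0" and t: "t \<ge> 0"
  shows "measure (MXs n D) {X \<in> space (MXs n D). emp_mean X off m a \<le> arm_mean D a - t} \<le> exp (- 2 * real m * t\<^sup>2)"
    and "measure (MXs n D) {X \<in> space (MXs n D). emp_mean X off m a \<ge> arm_mean D a + t} \<le> exp (- 2 * real m * t\<^sup>2)"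
    and "measure (MXs n D) {X \<in> space (MXs n D). \<bar>emp_mean X off m a - arm_mean D a\<bar> \<ge> t} \<le> 2 * exp (- 2 * real m * t\<^sup>2)"
proof -
  define J where "J = {a} \<times> {off..<off+m}"
  interpret P: prob_space "MXs n D" by (rule prob_space_MXs[OF B])
  have n: "n > 0" using a by simp
  interpret H: Hoeffding_ineq "MXs n D" J "\<lambda>i X. X i" "\<lambda>_. 0" "\<lambda>_. 1"
    "\<Sum>i\<in>J. P.expectation (\<lambda>X. X i)"
  proof unfold_locales
    show "finite J" unfolding J_def by simp
    show "P.indep_vars (\<lambda>_. borel) (\<lambda>i X. X i) J"
      by (rule MXs_indep_borel[OF B n]) (use a in \<open>auto simp: J_def\<close>)
    fix i assume "i \<in> J"
    then show "AE x in MXs n D. x i \<in> {0..1}" using MXs_AE[OF B a] by (auto simp: J_def)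
  qed simp
  have mu: "(\<Sum>i\<in>J. P.expectation (\<lambda>X. X i)) = m * arm_mean D a"
    unfolding J_def sum_block using MXs_expectation[OF B a] by simp
  have s1: "(\<Sum>i\<in>J. (1 - 0)\<^sup>2) = real m" unfolding J_def by simp
  have pos: "(\<Sum>i\<in>J. ((\<lambda>_. 1::real) i - (\<lambda>_. 0) i)\<^sup>2) > 0" using s1 m by simp
  have mt: "m * t \<ge> 0" using t by simp
  have e: "exp (-2 * (m * t)\<^sup>2 / real m) = exp (- 2 * real m * t\<^sup>2)"
    using m by (simp add: power2_eq_square field_simps)
  have sumX: "\<And>X. (\<Sum>i\<in>J. X i) = m * emp_mean X off m a"
    unfolding J_def sum_block emp_mean_def using m by simp
  have set1: "{X \<in> space (MXs n D). emp_mean X off m a \<le> arm_mean D a - t} =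
      {X \<in> space (MXs n D). (\<Sum>i\<in>J. X i) \<le> (\<Sum>i\<in>J. P.expectation (\<lambda>X. X i)) - m * t}"
    unfolding mu sumX
  proof (intro Collect_cong conj_cong refl)
    fix X
    have "real m * arm_mean D a - real m * t = real m * (arm_mean D a - t)" by (simp add: algebra_simps)
    then show "(emp_mean X off m a \<le> arm_mean D a - t) = (real m * emp_mean X off m a \<le> real m * arm_mean D a - real m * t)"
      using m by simp
  qed
  have set2: "{X \<in> space (MXs n D). emp_mean X off m a \<ge> arm_mean D a + t} =
      {X \<in> space (MXs n D). (\<Sum>i\<in>J. X i) \<ge> (\<Sum>i\<in>J. P.expectation (\<lambda>X. X i)) + m * t}"
    unfolding mu sumX
  proof (intro Collect_cong conj_cong refl)
    fix X
    have "real m * arm_mean D a + real m * t = real m * (arm_mean D a + t)" by (simp add: algebra_simps)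
    then show "(emp_mean X off m a \<ge> arm_mean D a + t) = (real m * emp_mean X off m a \<ge> real m * arm_mean D a + real m * t)"
      using m by simp
  qed
  have set3: "{X \<in> space (MXs n D). \<bar>emp_mean X off m a - arm_mean D a\<bar> \<ge> t} =
      {X \<in> space (MXs n D). \<bar>(\<Sum>i\<in>J. X i) - (\<Sum>i\<in>J. P.expectation (\<lambda>X. X i))\<bar> \<ge> m * t}"
  proof -
    have "\<And>X. \<bar>m * emp_mean X off m a - m * arm_mean D a\<bar> = m * \<bar>emp_mean X off m a - arm_mean D a\<bar>"
      using m by (metis abs_of_nat abs_mult right_diff_distrib)
    then show ?thesis unfolding mu sumX using m by auto
  qed
  show "measure (MXs n D) {X \<in> space (MXs n D). emp_mean X off m a \<le> arm_mean D a - t} \<le> exp (- 2 * real m * t\<^sup>2)"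
    using H.Hoeffding_ineq_le[OF mt pos] unfolding set1[symmetric] by (simp only: s1 e)
  show "measure (MXs n D) {X \<in> space (MXs n D). emp_mean X off m a \<ge> arm_mean D a + t} \<le> exp (- 2 * real m * t\<^sup>2)"
    using H.Hoeffding_ineq_ge[OF mt pos] unfolding set2[symmetric] by (simp only: s1 e)
  show "measure (MXs n D) {X \<in> space (MXs n D). \<bar>emp_mean X off m a - arm_mean D a\<bar> \<ge> t} \<le> 2 * exp (- 2 * real m * t\<^sup>2)"
    using H.Hoeffding_ineq_abs_ge[OF mt pos] unfolding set3[symmetric] by (simp only: s1 e)
qed

lemma emp_mean_indep:
  assumes B: "bandit_instance n D" and n: "n > 0"
  shows "prob_space.indep_vars (MXs n D) (\<lambda>_. borel) (\<lambda>a X. emp_mean X off m a) {..<n}"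
proof -
  interpret P: prob_space "MXs n D" by (rule prob_space_MXs[OF B])
  define K where "K = (\<lambda>a::nat. {a} \<times> {off..<off+m})"
  have ind: "P.indep_vars (\<lambda>_. borel) (\<lambda>i X. X i) ({..<n} \<times> UNIV)"
    by (rule MXs_indep_borel[OF B n]) simp
  have "P.indep_vars (\<lambda>j. PiM (K j) (\<lambda>_. borel)) (\<lambda>j \<omega>. restrict (\<lambda>i. \<omega> i) (K j)) {..<n}"
    by (rule P.indep_vars_restrict[OF ind]) (auto simp: K_def disjoint_family_on_def)
  then have "P.indep_vars (\<lambda>_. borel)
     (\<lambda>j \<omega>. (\<lambda>y. (\<Sum>k<m. y (j, off + k)) / real m) (restrict (\<lambda>i. \<omega> i) (K j))) {..<n}"
  proof (rule P.indep_vars_compose2)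
    fix j assume "j \<in> {..<n}"
    have "\<And>k. k < m \<Longrightarrow> (\<lambda>y. y (j, off + k)) \<in> borel_measurable (PiM (K j) (\<lambda>_. borel))"
      by (rule measurable_component_singleton) (auto simp: K_def)
    then show "(\<lambda>y. (\<Sum>k<m. y (j, off + k)) / real m) \<in> borel_measurable (PiM (K j) (\<lambda>_. borel))"
      by (intro borel_measurable_divide borel_measurable_sum) auto
  qed
  moreover have "\<And>j \<omega>. (\<lambda>y. (\<Sum>k<m. y (j, off + k)) / real m) (restrict (\<lambda>i. \<omega> i) (K j)) = emp_mean \<omega> off m j"
    by (auto simp: emp_mean_def K_def intro!: sum.cong arg_cong2[where f="(/)"])
  ultimately show ?thesis by simp
qed

lemma emp_events_indep:
  assumes B: "bandit_instance n D" and n: "n > 0" and J: "J \<subseteq> {..<n}" "finite J" "J \<noteq> {}"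
  shows "measure (MXs n D) (\<Inter>a\<in>J. {X \<in> space (MXs n D). emp_mean X off m a \<ge> \<theta>})
       = (\<Prod>a\<in>J. measure (MXs n D) {X \<in> space (MXs n D). emp_mean X off m a \<ge> \<theta>})"
proof -
  interpret P: prob_space "MXs n D" by (rule prob_space_MXs[OF B])
  have "P.prob (\<Inter>a\<in>J. (\<lambda>X. emp_mean X off m a) -` {\<theta>..} \<inter> space (MXs n D)) =
     (\<Prod>a\<in>J. P.prob ((\<lambda>X. emp_mean X off m a) -` {\<theta>..} \<inter> space (MXs n D)))"
    by (rule P.indep_varsD[OF emp_mean_indep[OF B n]]) (use J in auto)
  moreover have "\<And>a. (\<lambda>X. emp_mean X off m a) -` {\<theta>..} \<inter> space (MXs n D) = {X \<in> space (MXs n D). emp_mean X off m a \<ge> \<theta>}"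
    by auto
  ultimately show ?thesis by simp
qed

lemma count_events_bound:
  assumes B: "bandit_instance n D" and n: "n > 0" and A: "A \<subseteq> {..<n}" and k: "k > 0"
    and q: "q \<ge> 0" "\<And>a. a \<in> A \<Longrightarrow> measure (MXs n D) {X \<in> space (MXs n D). emp_mean X off m a \<ge> \<theta>} \<le> q"
  shows "measure (MXs n D) {X \<in> space (MXs n D). k \<le> card {a \<in> A. emp_mean X off m a \<ge> \<theta>}}
           \<le> real (card A choose k) * q ^ k"
proof -
  interpret P: prob_space "MXs n D" by (rule prob_space_MXs[OF B])
  have finA: "finite A" using A finite_subset by blast
  define E where "E = (\<lambda>a. {X \<in> space (MXs n D). emp_mean X off m a \<ge> \<theta>})"
  define F where "F = {J. J \<subseteq> A \<and> card J = k}"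
  have meas_emp: "\<And>a. (\<lambda>X. emp_mean X off m a) \<in> borel_measurable (MXs n D)"
    unfolding emp_mean_def using MXs_coord_meas[OF B] by measurable
  have Eset: "\<And>a. E a \<in> sets (MXs n D)" unfolding E_def using meas_emp by measurable
  have finF: "finite F" unfolding F_def using finA by (auto intro: finite_subset)
  have Jmeas: "\<And>J. J \<in> F \<Longrightarrow> (\<Inter>a\<in>J. E a) \<in> sets (MXs n D)"
  proof -
    fix J assume "J \<in> F"
    then have "J \<noteq> {}" "finite J" using k finA unfolding F_def by (auto intro: finite_subset)
    then show "(\<Inter>a\<in>J. E a) \<in> sets (MXs n D)" using Eset by auto
  qed
  have sub: "{X \<in> space (MXs n D). k \<le> card {a \<in> A. emp_mean X off m a \<ge> \<theta>}} \<subseteq> (\<Union>J\<in>F. \<Inter>a\<in>J. E a)"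
  proof
    fix X assume X: "X \<in> {X \<in> space (MXs n D). k \<le> card {a \<in> A. emp_mean X off m a \<ge> \<theta>}}"
    then obtain J where J: "J \<subseteq> {a \<in> A. emp_mean X off m a \<ge> \<theta>}" "card J = k"
      using obtain_subset_with_card_n by blast
    then have "J \<in> F" unfolding F_def by auto
    moreover have "X \<in> (\<Inter>a\<in>J. E a)" using J X k unfolding E_def by (auto simp: card_gt_0_iff)
    ultimately show "X \<in> (\<Union>J\<in>F. \<Inter>a\<in>J. E a)" by blast
  qed
  have "P.prob {X \<in> space (MXs n D). k \<le> card {a \<in> A. emp_mean X off m a \<ge> \<theta>}}
       \<le> P.prob (\<Union>J\<in>F. \<Inter>a\<in>J. E a)"
  proof (rule P.finite_measure_mono[OF sub])
    show "(\<Union>J\<in>F. \<Inter>a\<in>J. E a) \<in> sets (MXs n D)"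
      using Jmeas finF by auto
  qed
  also have "\<dots> \<le> (\<Sum>J\<in>F. P.prob (\<Inter>a\<in>J. E a))"
    by (rule P.finite_measure_subadditive_finite[OF finF]) (use Jmeas in auto)
  also have "\<dots> \<le> (\<Sum>J\<in>F. q ^ k)"
  proof (rule sum_mono)
    fix J assume JF: "J \<in> F"
    then have J: "J \<subseteq> {..<n}" "finite J" "J \<noteq> {}" "card J = k"
      using A k finA unfolding F_def by (auto intro: finite_subset)
    have "P.prob (\<Inter>a\<in>J. E a) = (\<Prod>a\<in>J. P.prob (E a))"
      unfolding E_def by (rule emp_events_indep[OF B n J(1-3)])
    also have "\<dots> \<le> (\<Prod>a\<in>J. q)"
      by (rule prod_mono) (use JF q in \<open>auto simp: E_def F_def\<close>)
    also have "\<dots> = q ^ k" using J by simp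
    finally show "P.prob (\<Inter>a\<in>J. E a) \<le> q ^ k" .
  qed
  also have "\<dots> = real (card A choose k) * q ^ k"
    unfolding F_def using n_subsets[OF finA, of k] by simp
  finally show ?thesis .
qed

lemma count_hoeffding:
  assumes B: "bandit_instance n D" and n: "n > 0" and A: "A \<subseteq> {..<n}" "A \<noteq> {}"
    and q: "\<And>a. a \<in> A \<Longrightarrow> measure (MXs n D) {X \<in> space (MXs n D). emp_mean X off m a \<ge> \<theta>} \<le> q"
    and s: "s \<ge> 0"
  shows "measure (MXs n D) {X \<in> space (MXs n D). real (card {a \<in> A. emp_mean X off m a \<ge> \<theta>}) \<ge> real (card A) * q + s}
           \<le> exp (- 2 * s\<^sup>2 / real (card A))"
proof -
  interpret P: prob_space "MXs n D" by (rule prob_space_MXs[OF B])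
  have finA: "finite A" using A finite_subset by blast
  define Y where "Y = (\<lambda>a X. if \<theta> \<le> emp_mean X off m a then 1 else (0::real))"
  define E where "E = (\<lambda>a. {X \<in> space (MXs n D). emp_mean X off m a \<ge> \<theta>})"
  have meas_emp: "\<And>a. (\<lambda>X. emp_mean X off m a) \<in> borel_measurable (MXs n D)"
    unfolding emp_mean_def using MXs_coord_meas[OF B] by measurable
  have Eset: "\<And>a. E a \<in> sets (MXs n D)" unfolding E_def using meas_emp by measurable
  have indY: "P.indep_vars (\<lambda>_. borel) Y A"
  proof -
    have "P.indep_vars (\<lambda>_. borel) (\<lambda>a X. emp_mean X off m a) A"
      by (rule P.indep_vars_subset[OF emp_mean_indep[OF B n] A(1)])
    then have "P.indep_vars (\<lambda>_. borel) (\<lambda>a X. (\<lambda>x. if \<theta> \<le> x then 1 else (0::real)) (emp_mean X off m a)) A"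
      by (rule P.indep_vars_compose2) measurable
    then show ?thesis unfolding Y_def by simp
  qed
  interpret H: Hoeffding_ineq "MXs n D" A Y "\<lambda>_. 0" "\<lambda>_. 1" "\<Sum>a\<in>A. P.expectation (Y a)"
  proof unfold_locales
    show "finite A" by fact
    show "P.indep_vars (\<lambda>_. borel) Y A" by fact
  qed (auto simp: Y_def)
  have EY: "\<And>a. P.expectation (Y a) = P.prob (E a)"
  proof -
    fix a
    have "P.expectation (Y a) = P.expectation (indicator (E a))"
      by (rule Bochner_Integration.integral_cong) (auto simp: Y_def E_def indicator_def)
    also have "\<dots> = P.prob (E a)" using Eset by simp
    finally show "P.expectation (Y a) = P.prob (E a)" .
  qed
  have mu: "(\<Sum>a\<in>A. P.expectation (Y a)) \<le> real (card A) * q"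
  proof -
    have "(\<Sum>a\<in>A. P.expectation (Y a)) \<le> (\<Sum>a\<in>A. q)"
      by (rule sum_mono) (use q in \<open>auto simp: EY E_def\<close>)
    then show ?thesis by simp
  qed
  have sumY: "\<And>X. (\<Sum>a\<in>A. Y a X) = real (card {a \<in> A. emp_mean X off m a \<ge> \<theta>})"
  proof -
    fix X
    have "(\<Sum>a\<in>A. Y a X) = (\<Sum>a\<in>{a \<in> A. emp_mean X off m a \<ge> \<theta>}. 1)"
      unfolding Y_def by (simp add: sum.inter_filter[OF finA, symmetric])
    then show "(\<Sum>a\<in>A. Y a X) = real (card {a \<in> A. emp_mean X off m a \<ge> \<theta>})" by simp
  qed
  have s1: "(\<Sum>i\<in>A. ((\<lambda>_. 1::real) i - (\<lambda>_. 0) i)\<^sup>2) = real (card A)" by simp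
  have pos: "(\<Sum>i\<in>A. ((\<lambda>_. 1::real) i - (\<lambda>_. 0) i)\<^sup>2) > 0" using finA A by (simp add: card_gt_0_iff)
  have sub: "{X \<in> space (MXs n D). real (card {a \<in> A. emp_mean X off m a \<ge> \<theta>}) \<ge> real (card A) * q + s}
      \<subseteq> {X \<in> space (MXs n D). (\<Sum>a\<in>A. Y a X) \<ge> (\<Sum>a\<in>A. P.expectation (Y a)) + s}"
    using mu unfolding sumY by auto
  have measY: "\<And>a. Y a \<in> borel_measurable (MXs n D)" unfolding Y_def using meas_emp by measurable
  have "P.prob {X \<in> space (MXs n D). real (card {a \<in> A. emp_mean X off m a \<ge> \<theta>}) \<ge> real (card A) * q + s}
      \<le> P.prob {X \<in> space (MXs n D). (\<Sum>a\<in>A. Y a X) \<ge> (\<Sum>a\<in>A. P.expectation (Y a)) + s}"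
    by (rule P.finite_measure_mono[OF sub]) (use measY in measurable)
  also have "\<dots> \<le> exp (- 2 * s\<^sup>2 / (\<Sum>i\<in>A. ((\<lambda>_. 1::real) i - (\<lambda>_. 0) i)\<^sup>2))"
    by (rule H.Hoeffding_ineq_ge[OF s pos])
  finally show ?thesis unfolding s1 .
qed

lemma binom_shrink:
  fixes n g r :: nat
  assumes "g \<le> n" "r \<le> n"
  shows "real ((n - g) choose r) \<le> real (n choose r) * exp (- real r * real g / real n)"
  using assms(1)
proof (induction g)
  case 0 then show ?case by simp
next
  case (Suc g)
  define M where "M = n - g"
  have M: "M \<ge> 1" "M \<le> n" using Suc.prems unfolding M_def by auto
  have IH: "real (M choose r) \<le> real (n choose r) * exp (- real r * real g / real n)"
    using Suc M_def by simp
  have eq: "real (M - r) * real (M choose r) = real M * real ((M - 1) choose r)"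
    using binomial_absorb_comp[of M r] by (metis of_nat_mult)
  have "real ((M - 1) choose r) \<le> real (M choose r) * exp (- real r / real n)"
  proof (cases "r \<le> M")
    case True
    have "real ((M - 1) choose r) = real (M choose r) * (real (M - r) / real M)"
      using eq M by (simp add: field_simps)
    also have "real (M - r) / real M = 1 - real r / real M" using True M by (simp add: field_simps of_nat_diff)
    also have "\<dots> \<le> 1 - real r / real n" using M by (simp add: frac_le)
    also have "\<dots> \<le> exp (- real r / real n)" using exp_ge_add_one_self[of "- real r / real n"] by simp
    finally show ?thesis by (simp add: mult_left_mono)
  next
    case False
    then have "real ((M - 1) choose r) = 0" using M by simp
    moreover have "0 \<le> real (M choose r) * exp (- real r / real n)" by simp
    ultimately show ?thesis by linarith
  qed
  also have "\<dots> \<le> real (n choose r) * exp (- real r * real g / real n) * exp (- real r / real n)"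
    using IH by (simp add: mult_right_mono)
  also have "\<dots> = real (n choose r) * exp (- real r * real (Suc g) / real n)"
    by (simp add: mult.assoc exp_add[symmetric] add_divide_distrib[symmetric] algebra_simps)
  finally show ?case using M_def by (simp add: diff_Suc)
qed

lemma rand_sets_finite: "finite (rand_sets n)"
  unfolding rand_sets_def by (rule finite_subset[of _ "Pow {..<n}"]) auto

lemma rand_set_size_le: "rand_set_size n \<le> n"
proof -
  have "real n powr (7/8) \<le> real n"
  proof (cases "n = 0")
    case False
    then have "real n powr (7/8) \<le> real n powr 1" by (intro powr_mono) auto
    then show ?thesis using False by simp
  qed simp
  then have "real n powr (7/8) / 2 \<le> real n" by auto
  then show ?thesis unfolding rand_set_size_def by linarith
qed

lemma card_rand_sets: "card (rand_sets n) = n choose rand_set_size n"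
  unfolding rand_sets_def using n_subsets[of "{..<n}" "rand_set_size n"] by simp

lemma rand_sets_nonempty: "rand_sets n \<noteq> {}"
proof -
  have "n choose rand_set_size n > 0" using rand_set_size_le by simp
  then show ?thesis using card_rand_sets[of n] by auto
qed

lemma rand_miss:
  assumes G: "G \<subseteq> {..<n}" and n: "n > 0"
  shows "measure (measure_pmf (pmf_of_set (rand_sets n))) {R. R \<inter> G = {}}
      \<le> exp (- real (rand_set_size n) * real (card G) / real n)"
proof -
  define r where "r = rand_set_size n"
  have finG: "finite G" using G finite_subset by blast
  have gn: "card G \<le> n" using card_mono[OF _ G] by simp
  have "rand_sets n \<inter> {R. R \<inter> G = {}} = {R. R \<subseteq> {..<n} - G \<and> card R = r}"
    unfolding rand_sets_def r_def by auto
  then have c: "card (rand_sets n \<inter> {R. R \<inter> G = {}}) = (n - card G) choose r"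
    using n_subsets[of "{..<n} - G" r] G finG by (simp add: card_Diff_subset)
  have pos: "real (n choose r) > 0" using rand_set_size_le r_def by simp
  have "measure (measure_pmf (pmf_of_set (rand_sets n))) {R. R \<inter> G = {}}
      = real ((n - card G) choose r) / real (n choose r)"
    using measure_pmf_of_set[OF rand_sets_nonempty rand_sets_finite] c card_rand_sets r_def by simp
  also have "\<dots> \<le> exp (- real r * real (card G) / real n)"
    using binom_shrink[OF gn, of r] rand_set_size_le r_def pos by (simp add: field_simps)
  finally show ?thesis unfolding r_def .
qed

lemma sl_inf: "infinite A \<Longrightarrow> sorted_list_of_set (A::nat set) = []"
  by (rule sorted_list_of_set.fold_insort_key.infinite)

lemma meas_insort:
  fixes h :: "'x \<Rightarrow> nat \<Rightarrow> real"
  assumes "\<And>a. (\<lambda>x. h x a) \<in> borel_measurable M"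
  shows "(\<lambda>x. insort_key (h x) y ys) \<in> measurable M (count_space UNIV)"
proof (induction ys)
  case Nil then show ?case by simp
next
  case (Cons z zs)
  have p: "{x \<in> space M. h x y \<le> h x z} \<in> sets M" using assms by measurable
  have c: "(\<lambda>x. z # insort_key (h x) y zs) \<in> measurable M (count_space UNIV)"
    using measurable_compose[OF Cons, of "\<lambda>l. z # l" "count_space UNIV"] by simp
  show ?case
    by (simp only: insort_key.simps) (rule measurable_If[OF _ c p], simp)
qed

lemma meas_sort_key:
  fixes h :: "'x \<Rightarrow> nat \<Rightarrow> real"
  assumes "\<And>a. (\<lambda>x. h x a) \<in> borel_measurable M"
  shows "(\<lambda>x. sort_key (h x) xs) \<in> measurable M (count_space UNIV)"
proof (induction xs)
  case Nil then show ?case by simp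
next
  case (Cons y ys)
  have "(\<lambda>x. (\<lambda>l x. insort_key (h x) y l) (sort_key (h x) ys) x) \<in> measurable M (count_space UNIV)"
    by (rule measurable_compose_countable[OF meas_insort[OF assms] Cons])
  then show ?case by simp
qed

lemma meas_top_k:
  fixes f :: "'x \<Rightarrow> nat \<Rightarrow> real"
  assumes "\<And>a. (\<lambda>x. f x a) \<in> borel_measurable M"
  shows "(\<lambda>x. top_k K (f x) S) \<in> measurable M (count_space UNIV)"
proof -
  have "(\<lambda>x. sort_key (\<lambda>a. - f x a) (sorted_list_of_set S)) \<in> measurable M (count_space UNIV)"
    by (rule meas_sort_key) (use assms in measurable)
  from measurable_compose[OF this, of "\<lambda>l. set (take K l)" "count_space UNIV"]
  show ?thesis unfolding top_k_def by simp
qed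

lemma meas_emp_mean:
  assumes B: "bandit_instance n D"
  shows "(\<lambda>X. emp_mean X off m a) \<in> borel_measurable (MXs n D)"
  unfolding emp_mean_def using MXs_coord_meas[OF B] by measurable

lemma meas_via_subsets:
  fixes g :: "'x \<Rightarrow> nat set"
  assumes g: "g \<in> measurable M (count_space UNIV)" "\<And>x. x \<in> space M \<Longrightarrow> g x \<subseteq> {..<n}"
    and F: "\<And>S. S \<subseteq> {..<n} \<Longrightarrow> (\<lambda>x. F S x) \<in> measurable M N"
  shows "(\<lambda>x. F (g x) x) \<in> measurable M N"
proof (rule measurable_compose_countable'[where I="Pow {..<n}"])
  show "countable (Pow {..<n::nat})" by (simp add: countable_finite)
  show "g \<in> measurable M (count_space (Pow {..<n}))"
    unfolding measurable_count_space_eq2[OF finite_Pow_iff[THEN iffD2], OF finite_lessThan]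
  proof (intro conjI ballI)
    show "g \<in> space M \<rightarrow> Pow {..<n}" using g(2) by auto
    fix a show "g -` {a} \<inter> space M \<in> sets M" using g(1) by (rule measurable_sets) simp
  qed
qed (use F in auto)

lemma meas_surv:
  assumes B: "bandit_instance n D" and p: "0 \<le> \<delta>' + \<phi>" "\<delta>' + \<phi> \<le> 1"
  shows "(\<lambda>X. surv n \<alpha> \<delta>' \<phi> \<epsilon> X i) \<in> measurable (MXs n D) (count_space UNIV)"
proof (induction i)
  case 0 then show ?case by simp
next
  case (Suc i)
  have "(\<lambda>X. (\<lambda>S X. top_k (round_size n (\<delta>' + \<phi>) (Suc i))
       (emp_mean X (round_offset \<alpha> \<delta>' \<epsilon> i) (round_samples \<alpha> \<delta>' \<epsilon> i)) S) (surv n \<alpha> \<delta>' \<phi> \<epsilon> X i) X)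
     \<in> measurable (MXs n D) (count_space UNIV)"
  proof (rule meas_via_subsets[OF Suc])
    show "\<And>X. surv n \<alpha> \<delta>' \<phi> \<epsilon> X i \<subseteq> {..<n}" using surv_props[OF p] by blast
    fix S :: "nat set"
    show "(\<lambda>X. top_k (round_size n (\<delta>' + \<phi>) (Suc i))
       (emp_mean X (round_offset \<alpha> \<delta>' \<epsilon> i) (round_samples \<alpha> \<delta>' \<epsilon> i)) S) \<in> measurable (MXs n D) (count_space UNIV)"
      by (rule meas_top_k) (rule meas_emp_mean[OF B])
  qed
  then show ?case by simp
qed

lemma meas_output_fixedR:
  assumes B: "bandit_instance n D" and p: "0 \<le> \<delta>' + \<phi>" "\<delta>' + \<phi> \<le> 1"
  shows "(\<lambda>X. aba_output n \<alpha> \<delta>' \<delta>'' \<phi> \<epsilon> R X) \<in> measurable (MXs n D) (count_space UNIV)"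
proof -
  define T where "T = num_rounds n (\<delta>' + \<phi>)"
  define off where "off = round_offset \<alpha> \<delta>' \<epsilon> T"
  define F where "F = (\<lambda>S X. hd (sort_key (\<lambda>a. - emp_mean X off (final_samples \<alpha> \<delta>'' \<epsilon> (card (S \<union> R))) a)
      (sorted_list_of_set (S \<union> R))))"
  have "(\<lambda>X. F (surv n \<alpha> \<delta>' \<phi> \<epsilon> X T) X) \<in> measurable (MXs n D) (count_space UNIV)"
  proof (rule meas_via_subsets[OF meas_surv[OF B p]])
    show "\<And>X. surv n \<alpha> \<delta>' \<phi> \<epsilon> X T \<subseteq> {..<n}" using surv_props[OF p] by blast
    fix S :: "nat set"
    have "(\<lambda>X. sort_key (\<lambda>a. - emp_mean X off (final_samples \<alpha> \<delta>'' \<epsilon> (card (S \<union> R))) a)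
      (sorted_list_of_set (S \<union> R))) \<in> measurable (MXs n D) (count_space UNIV)"
      by (rule meas_sort_key) (use meas_emp_mean[OF B] in measurable)
    from measurable_compose[OF this, of hd "count_space UNIV"]
    show "(\<lambda>X. F S X) \<in> measurable (MXs n D) (count_space UNIV)" unfolding F_def by simp
  qed
  then show ?thesis
    unfolding aba_output_def final_set_def F_def T_def off_def Let_def by simp
qed

lemma aba_space_MXs: "aba_space n D = measure_pmf (pmf_of_set (rand_sets n)) \<Otimes>\<^sub>M MXs n D"
  unfolding aba_space_def MXs_def ..

lemma aba_output_infinite:
  assumes "infinite R" "infinite R'"
  shows "aba_output n \<alpha> \<delta>' \<delta>'' \<phi> \<epsilon> R X = aba_output n \<alpha> \<delta>' \<delta>'' \<phi> \<epsilon> R' X"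
proof -
  have "infinite (final_set n \<alpha> \<delta>' \<phi> \<epsilon> R X)" "infinite (final_set n \<alpha> \<delta>' \<phi> \<epsilon> R' X)"
    using assms unfolding final_set_def by (auto dest: finite_subset[rotated])
  then show ?thesis unfolding aba_output_def Let_def by (simp add: sl_inf)
qed

lemma meas_output:
  assumes B: "bandit_instance n D" and p: "0 \<le> \<delta>' + \<phi>" "\<delta>' + \<phi> \<le> 1"
  shows "(\<lambda>\<omega>. aba_output n \<alpha> \<delta>' \<delta>'' \<phi> \<epsilon> (fst \<omega>) (snd \<omega>)) \<in> measurable (aba_space n D) (count_space UNIV)"
proof -
  define h :: "nat set \<Rightarrow> nat set" where "h = (\<lambda>R. if finite R then R else UNIV)"
  have eq: "\<And>R X. aba_output n \<alpha> \<delta>' \<delta>'' \<phi> \<epsilon> (h R) X = aba_output n \<alpha> \<delta>' \<delta>'' \<phi> \<epsilon> R X"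
    unfolding h_def by (auto intro: aba_output_infinite)
  have "(\<lambda>\<omega>. (\<lambda>R \<omega>. aba_output n \<alpha> \<delta>' \<delta>'' \<phi> \<epsilon> R (snd \<omega>)) (h (fst \<omega>)) \<omega>) \<in> measurable (aba_space n D) (count_space UNIV)"
  proof (rule measurable_compose_countable'[where I="insert UNIV (Collect finite)"])
    show "countable (insert (UNIV::nat set) (Collect finite))" by (simp add: countable_Collect_finite)
    fix R :: "nat set"
    show "(\<lambda>\<omega>. aba_output n \<alpha> \<delta>' \<delta>'' \<phi> \<epsilon> R (snd \<omega>)) \<in> measurable (aba_space n D) (count_space UNIV)"
      unfolding aba_space_MXs by (rule measurable_compose[OF measurable_snd meas_output_fixedR[OF B p]])
  next
    show "(\<lambda>\<omega>. h (fst \<omega>)) \<in> measurable (aba_space n D) (count_space (insert UNIV (Collect finite)))"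
      unfolding aba_space_MXs
      by (rule measurable_compose[OF measurable_fst]) (auto simp: h_def)
  qed
  then show ?thesis using eq by simp
qed

lemma success_sets:
  assumes B: "bandit_instance n D" and p: "0 \<le> \<delta>' + \<phi>" "\<delta>' + \<phi> \<le> 1"
  shows "{\<omega> \<in> space (aba_space n D).
          arm_mean D (aba_output n \<alpha> \<delta>' \<delta>'' \<phi> \<epsilon> (fst \<omega>) (snd \<omega>)) \<ge> best_mean n D - \<epsilon>} \<in> sets (aba_space n D)"
proof -
  have "(\<lambda>\<omega>. aba_output n \<alpha> \<delta>' \<delta>'' \<phi> \<epsilon> (fst \<omega>) (snd \<omega>)) -` {a. arm_mean D a \<ge> best_mean n D - \<epsilon>} \<inter> space (aba_space n D)
      \<in> sets (aba_space n D)"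
    by (rule measurable_sets[OF meas_output[OF B p]]) simp
  moreover have "(\<lambda>\<omega>. aba_output n \<alpha> \<delta>' \<delta>'' \<phi> \<epsilon> (fst \<omega>) (snd \<omega>)) -` {a. arm_mean D a \<ge> best_mean n D - \<epsilon>} \<inter> space (aba_space n D)
     = {\<omega> \<in> space (aba_space n D).
          arm_mean D (aba_output n \<alpha> \<delta>' \<delta>'' \<phi> \<epsilon> (fst \<omega>) (snd \<omega>)) \<ge> best_mean n D - \<epsilon>}" by auto
  ultimately show ?thesis by simp
qed

lemma pair_fst_measure:
  assumes "prob_space M1" "prob_space M2" "A \<in> sets M1"
  shows "measure (M1 \<Otimes>\<^sub>M M2) (A \<times> space M2) = measure M1 A"
proof -
  interpret M2: prob_space M2 by fact
  interpret M1: prob_space M1 by fact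
  have "emeasure (M1 \<Otimes>\<^sub>M M2) (A \<times> space M2) = emeasure M1 A * emeasure M2 (space M2)"
    by (rule M2.emeasure_pair_measure_Times) (use assms in auto)
  then show ?thesis by (simp add: measure_def M2.emeasure_space_1)
qed

lemma pair_snd_measure:
  assumes "prob_space M1" "prob_space M2" "B \<in> sets M2"
  shows "measure (M1 \<Otimes>\<^sub>M M2) (space M1 \<times> B) = measure M2 B"
proof -
  interpret M2: prob_space M2 by fact
  interpret M1: prob_space M1 by fact
  have "emeasure (M1 \<Otimes>\<^sub>M M2) (space M1 \<times> B) = emeasure M1 (space M1) * emeasure M2 B"
    by (rule M2.emeasure_pair_measure_Times) (use assms in auto)
  then show ?thesis by (simp add: measure_def M1.emeasure_space_1)
qed

lemma learn_from_events:
  assumes B: "bandit_instance n D"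
    and S: "S \<in> sets (aba_space n D)"
    and incl: "\<And>\<omega>. \<omega> \<in> space (aba_space n D) \<Longrightarrow> fst \<omega> \<in> rand_sets n \<Longrightarrow> fst \<omega> \<notin> BR \<Longrightarrow>
                 snd \<omega> \<notin> BX \<Longrightarrow> \<omega> \<in> S"
    and BX: "BX \<in> sets (MXs n D)"
    and bound: "measure (measure_pmf (pmf_of_set (rand_sets n))) BR + measure (MXs n D) BX \<le> \<delta>"
  shows "measure (aba_space n D) S \<ge> 1 - \<delta>"
proof -
  define MR where "MR = measure_pmf (pmf_of_set (rand_sets n))"
  have pR: "prob_space MR" unfolding MR_def by (rule prob_space_measure_pmf)
  have pX: "prob_space (MXs n D)" by (rule prob_space_MXs[OF B])
  have A: "aba_space n D = MR \<Otimes>\<^sub>M MXs n D" unfolding aba_space_MXs MR_def ..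
  interpret PP: pair_prob_space MR "MXs n D"
    using pR pX by (simp add: pair_prob_space_def pair_sigma_finite_def prob_space_imp_sigma_finite)
  define E1 where "E1 = ((- rand_sets n) \<union> BR) \<times> space (MXs n D)"
  define E2 where "E2 = space MR \<times> BX"
  have sR: "sets MR = UNIV" unfolding MR_def by simp
  have E1s: "E1 \<in> sets (aba_space n D)" unfolding A E1_def by (intro pair_measureI) (auto simp: sR)
  have E2s: "E2 \<in> sets (aba_space n D)" unfolding A E2_def by (intro pair_measureI BX) auto
  have sub: "space (aba_space n D) - S \<subseteq> E1 \<union> E2"
    using incl unfolding E1_def E2_def A by (fastforce simp: space_pair_measure)
  have m1: "measure (aba_space n D) E1 = measure MR ((- rand_sets n) \<union> BR)"
    unfolding A E1_def by (rule pair_fst_measure[OF pR pX]) (simp add: sR)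
  have "measure MR ((- rand_sets n) \<union> BR) \<le> measure MR (- rand_sets n) + measure MR BR"
    by (rule measure_Un_le) (auto simp: sR)
  moreover have "measure MR (- rand_sets n) = 0"
    unfolding MR_def
    by (subst measure_pmf_zero_iff) (simp add: set_pmf_of_set[OF rand_sets_nonempty rand_sets_finite])
  ultimately have m1': "measure (aba_space n D) E1 \<le> measure MR BR" using m1 by simp
  have m2: "measure (aba_space n D) E2 = measure (MXs n D) BX"
    unfolding A E2_def by (rule pair_snd_measure[OF pR pX BX])
  have "measure (aba_space n D) (space (aba_space n D) - S) \<le> measure (aba_space n D) (E1 \<union> E2)"
    unfolding A by (rule PP.finite_measure_mono) (use sub E1s E2s A in auto)
  also have "\<dots> \<le> measure (aba_space n D) E1 + measure (aba_space n D) E2"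
    unfolding A by (rule measure_Un_le) (use E1s E2s A in auto)
  also have "\<dots> \<le> \<delta>" using m1' m2 bound MR_def by simp
  finally have "measure (aba_space n D) (space (aba_space n D) - S) \<le> \<delta>" .
  moreover have "measure (aba_space n D) (space (aba_space n D) - S) = 1 - measure (aba_space n D) S"
    unfolding A using S A by (simp add: PP.prob_compl)
  ultimately show ?thesis by simp
qed

locale aba_setup =
  fixes n :: nat and D :: "nat \<Rightarrow> real measure" and \<alpha> \<delta>' \<delta>'' \<phi> \<epsilon> :: real
  assumes B: "bandit_instance n D" and n2: "n \<ge> 2"
    and \<alpha>: "0 < \<alpha>" "\<alpha> < 1" and \<delta>': "0 < \<delta>'" "\<delta>' < 1" and \<delta>'': "0 < \<delta>''" "\<delta>'' < 1"
    and \<phi>: "0 \<le> \<phi>" and p: "\<delta>' + \<phi> \<le> 1/2" and \<epsilon>: "0 < \<epsilon>" "\<epsilon> < 1"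
begin

definition "pp = \<delta>' + \<phi>"
definition "TT = num_rounds n pp"
definition "KK i = round_size n pp i"
definition "SS X i = surv n \<alpha> \<delta>' \<phi> \<epsilon> X i"
definition "emp i X a = emp_mean X (round_offset \<alpha> \<delta>' \<epsilon> i) (round_samples \<alpha> \<delta>' \<epsilon> i) a"
definition "mu a = arm_mean D a"
definition "mus = best_mean n D"
definition "\<theta> = mus - \<alpha> * \<epsilon> / 2"
definition "Good = {a. a < n \<and> mu a \<ge> mus - \<alpha> * \<epsilon>}"
definition "Bad = {a. a < n \<and> mu a < mus - \<alpha> * \<epsilon>}"
definition "Lc i X = card {a \<in> Bad. emp i X a \<ge> \<theta>}"
definition "offF = round_offset \<alpha> \<delta>' \<epsilon> TT"
definition "tt = (1 - \<alpha>) * \<epsilon> / 2"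
definition "FinalBad = {X \<in> space (MXs n D). \<exists>a<n. \<exists>s\<in>{1..n}.
    \<bar>emp_mean X offF (final_samples \<alpha> \<delta>'' \<epsilon> s) a - mu a\<bar> \<ge> tt}"

lemma pp: "0 \<le> pp" "pp \<le> 1/2" using \<delta>' \<phi> p unfolding pp_def by auto

lemma n0: "n > 0" using n2 by simp

lemma best_exists: "\<exists>a<n. mu a = mus" "\<And>a. a < n \<Longrightarrow> mu a \<le> mus"
proof -
  have fin: "finite (arm_mean D ` {..<n})" "arm_mean D ` {..<n} \<noteq> {}" using n2 by (auto simp: lessThan_empty_iff)
  from Max_in[OF fin] show "\<exists>a<n. mu a = mus" unfolding mus_def best_mean_def mu_def by auto
  fix a assume "a < n"
  then show "mu a \<le> mus" unfolding mus_def best_mean_def mu_def using fin by (intro Max_ge) auto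
qed

lemma T_exists: "\<exists>i. real (round_size n pp i) \<le> real n powr (3/4) / 2"
  using num_rounds_exists[OF pp] n2 by simp

lemma T_pos: "TT > 0" unfolding TT_def by (rule num_rounds_pos[OF n2 T_exists])

lemma KT_le: "real (KK TT) \<le> real n powr (3/4) / 2"
  unfolding KK_def TT_def by (rule num_rounds_le[OF T_exists])

lemma K_gt: "i < TT \<Longrightarrow> real (KK i) > real n powr (3/4) / 2"
  unfolding KK_def TT_def by (rule num_rounds_gt)

lemma K_antimono: "i \<le> j \<Longrightarrow> KK j \<le> KK i"
  unfolding KK_def using round_size_antimono pp by auto

lemma SS_props: "SS X i \<subseteq> {..<n}" "card (SS X i) = KK i" "finite (SS X i)"
  using surv_props[of \<delta>' \<phi> n \<alpha> \<epsilon> X i] pp unfolding SS_def KK_def pp_def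
  by (auto intro: finite_subset)

lemma SS_Suc: "SS X (Suc i) = top_k (KK (Suc i)) (emp i X) (SS X i)"
  unfolding SS_def KK_def emp_def pp_def by simp

lemma round_samples_ge:
  "real (round_samples \<alpha> \<delta>' \<epsilon> i) \<ge> real (Suc i) * (2 / (\<alpha> * \<epsilon>)\<^sup>2 * ln (1 / \<delta>'))"
proof -
  have "2 / (\<alpha> * \<epsilon>)\<^sup>2 * ln (1 / \<delta>') \<le> real (nat \<lceil>2 / (\<alpha> * \<epsilon>)\<^sup>2 * ln (1 / \<delta>')\<rceil>)" by linarith
  moreover have "real (round_samples \<alpha> \<delta>' \<epsilon> i) = real (Suc i) * real (nat \<lceil>2 / (\<alpha> * \<epsilon>)\<^sup>2 * ln (1 / \<delta>')\<rceil>)"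
    unfolding round_samples_def by (simp add: algebra_simps)
  ultimately show ?thesis by (metis mult_left_mono of_nat_0_le_iff)
qed

lemma round_samples_pos: "round_samples \<alpha> \<delta>' \<epsilon> i > 0"
proof -
  have "ln (1 / \<delta>') > 0" using \<delta>' by simp
  then have "2 / (\<alpha> * \<epsilon>)\<^sup>2 * ln (1 / \<delta>') > 0" using \<alpha> \<epsilon> by simp
  then have "real (Suc i) * (2 / (\<alpha> * \<epsilon>)\<^sup>2 * ln (1 / \<delta>')) > 0"
    by (metis mult_pos_pos of_nat_0_less_iff zero_less_Suc)
  then have "real (round_samples \<alpha> \<delta>' \<epsilon> i) > 0" using round_samples_ge[of i] by linarith
  then show ?thesis by simp
qed

lemma hoeff_exp_bound:
  "exp (- 2 * real (round_samples \<alpha> \<delta>' \<epsilon> i) * (\<alpha> * \<epsilon> / 2)\<^sup>2) \<le> \<delta>' ^ Suc i"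
proof -
  have "real (Suc i) * ln (1 / \<delta>') \<le> 2 * real (round_samples \<alpha> \<delta>' \<epsilon> i) * (\<alpha> * \<epsilon> / 2)\<^sup>2"
  proof -
    have "real (Suc i) * ln (1 / \<delta>') = real (Suc i) * (2 / (\<alpha> * \<epsilon>)\<^sup>2 * ln (1 / \<delta>')) * ((\<alpha> * \<epsilon>)\<^sup>2 / 2)"
      using \<alpha> \<epsilon> by (simp add: field_simps)
    also have "\<dots> \<le> real (round_samples \<alpha> \<delta>' \<epsilon> i) * ((\<alpha> * \<epsilon>)\<^sup>2 / 2)"
      by (rule mult_right_mono[OF round_samples_ge]) simp
    also have "\<dots> = 2 * real (round_samples \<alpha> \<delta>' \<epsilon> i) * (\<alpha> * \<epsilon> / 2)\<^sup>2"
      by (simp add: power2_eq_square field_simps)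
    finally show ?thesis .
  qed
  then have "exp (- 2 * real (round_samples \<alpha> \<delta>' \<epsilon> i) * (\<alpha> * \<epsilon> / 2)\<^sup>2) \<le> exp (- (real (Suc i) * ln (1 / \<delta>')))"
    by simp
  also have "\<dots> = exp (real (Suc i) * ln \<delta>')" using \<delta>' by (simp add: ln_div)
  also have "\<dots> = \<delta>' ^ Suc i" using \<delta>' by (simp only: exp_of_nat_mult exp_ln)
  finally show ?thesis .
qed

lemma meas_emp: "(\<lambda>X. emp i X a) \<in> borel_measurable (MXs n D)"
  unfolding emp_def by (rule meas_emp_mean[OF B])

lemma unlucky_bound:
  assumes a: "a < n" and th: "\<theta> \<le> mu a - \<alpha> * \<epsilon> / 2"
  shows "measure (MXs n D) {X \<in> space (MXs n D). emp i X a < \<theta>} \<le> \<delta>' ^ Suc i"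
proof -
  interpret P: prob_space "MXs n D" by (rule prob_space_MXs[OF B])
  have "P.prob {X \<in> space (MXs n D). emp i X a < \<theta>}
     \<le> P.prob {X \<in> space (MXs n D). emp_mean X (round_offset \<alpha> \<delta>' \<epsilon> i) (round_samples \<alpha> \<delta>' \<epsilon> i) a \<le> arm_mean D a - \<alpha> * \<epsilon> / 2}"
    by (rule P.finite_measure_mono) (use th meas_emp_mean[OF B] in \<open>auto simp: emp_def mu_def\<close>, measurable)
  also have "\<dots> \<le> exp (- 2 * real (round_samples \<alpha> \<delta>' \<epsilon> i) * (\<alpha> * \<epsilon> / 2)\<^sup>2)"
    by (rule hoeffding_MXs(1)[OF B a round_samples_pos]) (use \<alpha> \<epsilon> in simp)
  also have "\<dots> \<le> \<delta>' ^ Suc i" by (rule hoeff_exp_bound)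
  finally show ?thesis .
qed

lemma lucky_bound:
  assumes a: "a < n" and th: "\<theta> \<ge> mu a + \<alpha> * \<epsilon> / 2"
  shows "measure (MXs n D) {X \<in> space (MXs n D). emp i X a \<ge> \<theta>} \<le> \<delta>' ^ Suc i"
proof -
  interpret P: prob_space "MXs n D" by (rule prob_space_MXs[OF B])
  have "P.prob {X \<in> space (MXs n D). emp i X a \<ge> \<theta>}
     \<le> P.prob {X \<in> space (MXs n D). emp_mean X (round_offset \<alpha> \<delta>' \<epsilon> i) (round_samples \<alpha> \<delta>' \<epsilon> i) a \<ge> arm_mean D a + \<alpha> * \<epsilon> / 2}"
    by (rule P.finite_measure_mono) (use th meas_emp_mean[OF B] in \<open>auto simp: emp_def mu_def\<close>, measurable)
  also have "\<dots> \<le> exp (- 2 * real (round_samples \<alpha> \<delta>' \<epsilon> i) * (\<alpha> * \<epsilon> / 2)\<^sup>2)"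
    by (rule hoeffding_MXs(2)[OF B a round_samples_pos]) (use \<alpha> \<epsilon> in simp)
  also have "\<dots> \<le> \<delta>' ^ Suc i" by (rule hoeff_exp_bound)
  finally show ?thesis .
qed

lemma bad_lucky_bound:
  assumes a: "a \<in> Bad"
  shows "measure (MXs n D) {X \<in> space (MXs n D). emp i X a \<ge> \<theta>} \<le> \<delta>' ^ Suc i"
  by (rule lucky_bound) (use a in \<open>auto simp: Bad_def \<theta>_def\<close>)

end

context aba_setup
begin

lemma final_samples_pos:
  assumes "s \<ge> 1"
  shows "final_samples \<alpha> \<delta>'' \<epsilon> s > 0"
    and "exp (- 2 * real (final_samples \<alpha> \<delta>'' \<epsilon> s) * tt\<^sup>2) \<le> \<delta>''"
proof -
  define c where "c = 2 / ((1 - \<alpha>) * \<epsilon>)\<^sup>2"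
  have c: "c > 0" unfolding c_def using \<alpha> \<epsilon> by simp
  have l1: "ln (real s / \<delta>'') \<ge> ln (1 / \<delta>'')" using assms \<delta>'' by (simp add: divide_right_mono)
  have l0: "ln (1 / \<delta>'') > 0" using \<delta>'' by simp
  have ge: "real (final_samples \<alpha> \<delta>'' \<epsilon> s) \<ge> c * ln (real s / \<delta>'')"
    unfolding final_samples_def c_def by linarith
  have "c * ln (real s / \<delta>'') \<ge> c * ln (1 / \<delta>'')" using l1 c by (simp add: mult_left_mono)
  moreover have "c * ln (1 / \<delta>'') > 0" using c l0 by simp
  ultimately show "final_samples \<alpha> \<delta>'' \<epsilon> s > 0" using ge by simp
  define w2 where "w2 = ((1 - \<alpha>) * \<epsilon>)\<^sup>2"
  have ne: "w2 > 0" unfolding w2_def using \<alpha> \<epsilon> by simp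
  have tt2: "tt\<^sup>2 = w2 / 4" unfolding tt_def w2_def by (simp add: power_divide)
  have c1: "c * (2 * tt\<^sup>2) = 1" unfolding tt2 c_def w2_def[symmetric] using ne by simp
  have "ln (1 / \<delta>'') = c * ln (1 / \<delta>'') * (2 * tt\<^sup>2)"
    using c1 by (simp add: algebra_simps)
  also have "\<dots> \<le> real (final_samples \<alpha> \<delta>'' \<epsilon> s) * (2 * tt\<^sup>2)"
    using ge \<open>c * ln (real s / \<delta>'') \<ge> c * ln (1 / \<delta>'')\<close> by (intro mult_right_mono) auto
  finally have "- 2 * real (final_samples \<alpha> \<delta>'' \<epsilon> s) * tt\<^sup>2 \<le> - ln (1 / \<delta>'')" by simp
  then have "exp (- 2 * real (final_samples \<alpha> \<delta>'' \<epsilon> s) * tt\<^sup>2) \<le> exp (- ln (1 / \<delta>''))" by simp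
  also have "\<dots> = \<delta>''" using \<delta>'' by (simp add: ln_div)
  finally show "exp (- 2 * real (final_samples \<alpha> \<delta>'' \<epsilon> s) * tt\<^sup>2) \<le> \<delta>''" .
qed

definition "EF x = {X \<in> space (MXs n D). \<bar>emp_mean X offF (final_samples \<alpha> \<delta>'' \<epsilon> (snd x)) (fst x) - mu (fst x)\<bar> \<ge> tt}"

lemma FinalBad_eq: "FinalBad = (\<Union>x\<in>{..<n} \<times> {1..n}. EF x)"
  unfolding FinalBad_def EF_def by (auto; force)

lemma EF_sets: "EF x \<in> sets (MXs n D)"
  unfolding EF_def using meas_emp_mean[OF B] by measurable

lemma FinalBad_sets: "FinalBad \<in> sets (MXs n D)"
  unfolding FinalBad_eq using EF_sets by (intro sets.finite_UN) auto

lemma final_bound: "measure (MXs n D) FinalBad \<le> 2 * real n ^ 2 * \<delta>''"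
proof -
  interpret P: prob_space "MXs n D" by (rule prob_space_MXs[OF B])
  have "measure (MXs n D) FinalBad \<le> (\<Sum>x\<in>{..<n} \<times> {1..n}. measure (MXs n D) (EF x))"
    unfolding FinalBad_eq by (rule measure_UNION_le) (use EF_sets in auto)
  also have "\<dots> \<le> (\<Sum>x\<in>{..<n} \<times> {1..n}. 2 * \<delta>'')"
  proof (rule sum_mono)
    fix x assume "x \<in> {..<n} \<times> {1..n}"
    then obtain a s where x: "x = (a, s)" "a < n" "s \<ge> 1" by auto
    have "measure (MXs n D) (EF x) \<le> 2 * exp (- 2 * real (final_samples \<alpha> \<delta>'' \<epsilon> s) * tt\<^sup>2)"
      unfolding mu_def EF_def x fst_conv snd_conv
      by (rule hoeffding_MXs(3)[OF B x(2) final_samples_pos(1)[OF x(3)]])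
         (use \<alpha> \<epsilon> in \<open>simp add: tt_def\<close>)
    also have "\<dots> \<le> 2 * \<delta>''" using final_samples_pos(2)[OF x(3)] by simp
    finally show "measure (MXs n D) (EF x) \<le> 2 * \<delta>''" .
  qed
  also have "\<dots> = 2 * real n ^ 2 * \<delta>''" by (simp add: power2_eq_square)
  finally show ?thesis .
qed

lemma det_final:
  assumes R: "R \<in> rand_sets n" and X: "X \<notin> FinalBad" "X \<in> space (MXs n D)"
    and g: "g \<in> Good" "g \<in> final_set n \<alpha> \<delta>' \<phi> \<epsilon> R X"
  shows "arm_mean D (aba_output n \<alpha> \<delta>' \<delta>'' \<phi> \<epsilon> R X) \<ge> best_mean n D - \<epsilon>"
proof -
  define U where "U = final_set n \<alpha> \<delta>' \<phi> \<epsilon> R X"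
  define f where "f = (\<lambda>a. emp_mean X offF (final_samples \<alpha> \<delta>'' \<epsilon> (card U)) a)"
  have Usub: "U \<subseteq> {..<n}" unfolding U_def final_set_def
    using SS_props(1)[of X TT] R unfolding SS_def TT_def pp_def rand_sets_def by auto
  have finU: "finite U" using Usub finite_subset by blast
  have gU: "g \<in> U" using g U_def by simp
  have cU: "card U \<in> {1..n}"
    using card_mono[OF _ Usub] finU gU by (auto simp: Suc_le_eq card_gt_0_iff)
  define outa where "outa = hd (sort_key (\<lambda>a. - f a) (sorted_list_of_set U))"
  have out: "aba_output n \<alpha> \<delta>' \<delta>'' \<phi> \<epsilon> R X = outa"
    unfolding aba_output_def outa_def f_def U_def offF_def TT_def pp_def Let_def by simp
  have oU: "outa \<in> U" and fg: "f g \<le> f outa"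
    using hd_sort_key_max[OF finU, where f=f] gU unfolding outa_def by auto
  have dev: "\<bar>f a - mu a\<bar> < tt" if aU: "a \<in> U" for a
  proof (rule ccontr)
    assume "\<not> \<bar>f a - mu a\<bar> < tt"
    then have "tt \<le> \<bar>emp_mean X offF (final_samples \<alpha> \<delta>'' \<epsilon> (card U)) a - mu a\<bar>" unfolding f_def by simp
    moreover have "a < n" using aU Usub by auto
    ultimately have "X \<in> FinalBad" unfolding FinalBad_def using X(2) cU by blast
    then show False using X(1) by simp
  qed
  have "mu outa > f outa - tt" using dev[OF oU] by linarith
  moreover have "f g > mu g - tt" using dev[OF gU] by linarith
  moreover have "mu g \<ge> mus - \<alpha> * \<epsilon>" using g unfolding Good_def by simp
  ultimately have "mu outa > mus - \<alpha> * \<epsilon> - 2 * tt" using fg by linarith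
  moreover have "\<alpha> * \<epsilon> + 2 * tt = \<epsilon>" unfolding tt_def by (simp add: field_simps)
  ultimately show ?thesis unfolding out mu_def mus_def by linarith
qed

lemma det_round:
  assumes a: "astar \<in> SS X i" "emp i X astar \<ge> \<theta>" "astar \<notin> SS X (Suc i)"
  shows "KK (Suc i) \<le> card (SS X (Suc i) \<inter> Good) + Lc i X"
proof -
  have sub: "SS X (Suc i) \<subseteq> (SS X (Suc i) \<inter> Good) \<union> {a \<in> Bad. emp i X a \<ge> \<theta>}"
  proof
    fix b assume b: "b \<in> SS X (Suc i)"
    have "emp i X astar \<le> emp i X b"
      using top_k_ge[OF SS_props(3)[of X i] a(1), of "KK (Suc i)" "emp i X" b] a(3) b
      unfolding SS_Suc by simp
    moreover have "b < n" using b SS_props(1) by auto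
    ultimately show "b \<in> (SS X (Suc i) \<inter> Good) \<union> {a \<in> Bad. emp i X a \<ge> \<theta>}"
      using b a(2) unfolding Good_def Bad_def by auto
  qed
  have finB: "finite {a \<in> Bad. emp i X a \<ge> \<theta>}" unfolding Bad_def by auto
  have "KK (Suc i) = card (SS X (Suc i))" using SS_props(2) by simp
  also have "\<dots> \<le> card ((SS X (Suc i) \<inter> Good) \<union> {a \<in> Bad. emp i X a \<ge> \<theta>})"
    by (rule card_mono[OF _ sub]) (use SS_props(3) finB in auto)
  also have "\<dots> \<le> card (SS X (Suc i) \<inter> Good) + Lc i X"
    unfolding Lc_def by (rule card_Un_le)
  finally show ?thesis .
qed

lemma meas_Lc: "(\<lambda>X. real (Lc i X)) \<in> borel_measurable (MXs n D)"
proof -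
  have finB: "finite Bad" unfolding Bad_def by auto
  have eq: "\<And>X. real (Lc i X) = (\<Sum>a\<in>Bad. if \<theta> \<le> emp i X a then 1 else 0)"
    unfolding Lc_def by (simp add: sum.inter_filter[OF finB, symmetric])
  show ?thesis unfolding eq using meas_emp by measurable
qed

end

context aba_setup
begin

definition "Succ = {\<omega> \<in> space (aba_space n D).
          arm_mean D (aba_output n \<alpha> \<delta>' \<delta>'' \<phi> \<epsilon> (fst \<omega>) (snd \<omega>)) \<ge> best_mean n D - \<epsilon>}"

lemma Succ_sets: "Succ \<in> sets (aba_space n D)"
  unfolding Succ_def by (rule success_sets[OF B]) (use \<delta>' \<phi> p in auto)

lemma learns_of_Succ: "measure (aba_space n D) Succ \<ge> 1 - \<delta> \<Longrightarrow> aba_learns n \<alpha> \<delta>' \<delta>'' \<phi> \<epsilon> \<delta> D"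
  unfolding aba_learns_def Succ_def by simp

lemma space_split: "\<omega> \<in> space (aba_space n D) \<Longrightarrow> snd \<omega> \<in> space (MXs n D)"
  unfolding aba_space_MXs by (auto simp: space_pair_measure)

lemma final_set_SS: "final_set n \<alpha> \<delta>' \<phi> \<epsilon> R X = SS X TT \<union> R"
  unfolding final_set_def SS_def TT_def pp_def ..

lemma astar_Good: "a < n \<Longrightarrow> mu a = mus \<Longrightarrow> a \<in> Good"
  unfolding Good_def using \<alpha> \<epsilon> by simp

lemma meas_unlucky: "{X \<in> space (MXs n D). emp i X a < \<theta>} \<in> sets (MXs n D)"
  using meas_emp by measurable

lemma meas_L: "{X \<in> space (MXs n D). c \<le> d * real (Lc i X)} \<in> sets (MXs n D)"
  using meas_Lc by measurable

lemma Lc_prob: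
  assumes k: "k > 0"
  shows "measure (MXs n D) {X \<in> space (MXs n D). real k \<le> real (Lc i X)} \<le> real (card Bad choose k) * (\<delta>' ^ Suc i) ^ k"
proof -
  have "{X \<in> space (MXs n D). real k \<le> real (Lc i X)} =
     {X \<in> space (MXs n D). k \<le> card {a \<in> Bad. emp_mean X (round_offset \<alpha> \<delta>' \<epsilon> i) (round_samples \<alpha> \<delta>' \<epsilon> i) a \<ge> \<theta>}}"
    unfolding Lc_def emp_def by simp
  also have "measure (MXs n D) \<dots> \<le> real (card Bad choose k) * (\<delta>' ^ Suc i) ^ k"
    by (rule count_events_bound[OF B n0 _ k]) (use \<delta>' bad_lucky_bound in \<open>auto simp: Bad_def emp_def\<close>)
  finally show ?thesis .
qed

lemma learns_A:
  assumes T1: "TT = 1" and K1: "KK 1 \<ge> 2" and nd: "real n * \<delta>' \<le> 1"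
    and bound: "\<delta>' + (real n * \<delta>')\<^sup>2 + 2 * real n ^ 2 * \<delta>'' \<le> \<delta>"
  shows "aba_learns n \<alpha> \<delta>' \<delta>'' \<phi> \<epsilon> \<delta> D"
proof -
  obtain astar where as: "astar < n" "mu astar = mus" using best_exists(1) by blast
  define BX where "BX = FinalBad \<union> {X \<in> space (MXs n D). emp 0 X astar < \<theta>}
     \<union> {X \<in> space (MXs n D). real (KK 1) \<le> 1 * real (Lc 0 X)}"
  have BXs: "BX \<in> sets (MXs n D)" unfolding BX_def by (intro sets.Un FinalBad_sets meas_unlucky meas_L)
  show ?thesis
  proof (rule learns_of_Succ, rule learn_from_events[OF B Succ_sets _ BXs])
    fix \<omega> assume om: "\<omega> \<in> space (aba_space n D)" "fst \<omega> \<in> rand_sets n" "fst \<omega> \<notin> {}" "snd \<omega> \<notin> BX"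
    define X where "X = snd \<omega>"
    define R where "R = fst \<omega>"
    have X: "X \<in> space (MXs n D)" using space_split[OF om(1)] X_def by simp
    have nfb: "X \<notin> FinalBad" and ul: "emp 0 X astar \<ge> \<theta>" and lc: "Lc 0 X < KK 1"
      using om(4) X unfolding BX_def X_def[symmetric] by auto
    have "\<exists>g. g \<in> Good \<and> g \<in> SS X 1"
    proof (cases "astar \<in> SS X 1")
      case True then show ?thesis using astar_Good[OF as] by blast
    next
      case False
      have "astar \<in> SS X 0" using as by (simp add: SS_def)
      from det_round[OF this ul] False have "KK (Suc 0) \<le> card (SS X (Suc 0) \<inter> Good) + Lc 0 X" by simp
      then have "card (SS X 1 \<inter> Good) > 0" using lc by simp
      then show ?thesis by (auto simp: card_gt_0_iff)
    qed
    then obtain g where g: "g \<in> Good" "g \<in> final_set n \<alpha> \<delta>' \<phi> \<epsilon> R X"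
      unfolding final_set_SS T1 by blast
    have "arm_mean D (aba_output n \<alpha> \<delta>' \<delta>'' \<phi> \<epsilon> R X) \<ge> best_mean n D - \<epsilon>"
      by (rule det_final[OF _ nfb X g]) (use om R_def in simp)
    then show "\<omega> \<in> Succ" unfolding Succ_def R_def X_def using om by simp
  next
    interpret P: prob_space "MXs n D" by (rule prob_space_MXs[OF B])
    have u: "measure (MXs n D) {X \<in> space (MXs n D). emp 0 X astar < \<theta>} \<le> \<delta>'"
      using unlucky_bound[OF as(1), of 0] as unfolding \<theta>_def by simp
    have l: "measure (MXs n D) {X \<in> space (MXs n D). real (KK 1) \<le> 1 * real (Lc 0 X)} \<le> (real n * \<delta>')\<^sup>2"
    proof -
      have "measure (MXs n D) {X \<in> space (MXs n D). real (KK 1) \<le> 1 * real (Lc 0 X)}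
          \<le> real (card Bad choose KK 1) * (\<delta>' ^ Suc 0) ^ KK 1"
        using Lc_prob[of "KK 1" 0] K1 by simp
      also have "\<dots> \<le> (real n * \<delta>') ^ KK 1"
      proof (cases "KK 1 \<le> card Bad")
        case True
        have "real (card Bad choose KK 1) \<le> real (card Bad) ^ KK 1"
          using binomial_le_pow[OF True] by (metis of_nat_le_iff of_nat_power)
        also have "\<dots> \<le> real n ^ KK 1"
        proof -
          have "card Bad \<le> n" using card_mono[of "{..<n}" Bad] unfolding Bad_def by auto
          then show ?thesis by (simp add: power_mono)
        qed
        finally show ?thesis using \<delta>' by (simp add: power_mult_distrib mult_right_mono)
      next
        case False
        then have z: "real (card Bad choose KK 1) = 0" by simp
        have "0 \<le> (real n * \<delta>') ^ KK 1" using \<delta>' by simp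
        then show ?thesis by (metis z mult_zero_left)
      qed
      also have "\<dots> \<le> (real n * \<delta>')\<^sup>2"
        by (rule power_decreasing) (use K1 nd \<delta>' in auto)
      finally show ?thesis .
    qed
    have "measure (MXs n D) BX \<le> measure (MXs n D) FinalBad + measure (MXs n D) {X \<in> space (MXs n D). emp 0 X astar < \<theta>}
       + measure (MXs n D) {X \<in> space (MXs n D). real (KK 1) \<le> 1 * real (Lc 0 X)}"
    proof -
      have "measure (MXs n D) BX \<le> measure (MXs n D) (FinalBad \<union> {X \<in> space (MXs n D). emp 0 X astar < \<theta>})
         + measure (MXs n D) {X \<in> space (MXs n D). real (KK 1) \<le> 1 * real (Lc 0 X)}"
        unfolding BX_def by (intro measure_Un_le sets.Un FinalBad_sets meas_unlucky meas_L)
      moreover have "measure (MXs n D) (FinalBad \<union> {X \<in> space (MXs n D). emp 0 X astar < \<theta>})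
         \<le> measure (MXs n D) FinalBad + measure (MXs n D) {X \<in> space (MXs n D). emp 0 X astar < \<theta>}"
        by (intro measure_Un_le FinalBad_sets meas_unlucky)
      ultimately show ?thesis by linarith
    qed
    also have "\<dots> \<le> \<delta>" using final_bound u l bound by linarith
    finally show "measure (measure_pmf (pmf_of_set (rand_sets n))) {} + measure (MXs n D) BX \<le> \<delta>" by simp
  qed
qed

end

context aba_setup
begin

lemma geom_bound:
  assumes "\<delta>' \<le> 1/2"
  shows "(\<Sum>i<N. \<delta>' ^ Suc i) \<le> 2 * \<delta>'"
proof -
  have "(\<Sum>i<N. \<delta>' ^ Suc i) = \<delta>' * (\<Sum>i<N. \<delta>' ^ i)" by (simp add: sum_distrib_left)
  also have "(\<Sum>i<N. \<delta>' ^ i) = (1 - \<delta>' ^ N) / (1 - \<delta>')" using \<delta>' by (simp add: sum_gp_strict)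
  also have "\<dots> \<le> 1 / (1 - \<delta>')" using \<delta>' by (simp add: divide_right_mono)
  also have "\<dots> \<le> 2" using assms \<delta>' by (simp add: field_simps)
  finally show ?thesis using \<delta>' by (simp add: mult_left_mono)
qed

lemma L_prob_B:
  assumes dp: "\<delta>' \<le> pp / 8" and i: "i < TT" and KT2: "KK TT \<ge> 2"
  shows "measure (MXs n D) {X \<in> space (MXs n D). real (KK (Suc i)) \<le> 2 * real (Lc i X)}
          \<le> exp (- (real (KK TT))\<^sup>2 / (8 * real n))"
proof -
  interpret P: prob_space "MXs n D" by (rule prob_space_MXs[OF B])
  define K where "K = KK (Suc i)"
  have KKT: "KK TT \<le> K" unfolding K_def using K_antimono i by simp
  have K2: "real K \<ge> 2" using KKT KT2 by simp
  have cardB: "card Bad \<le> n" using card_mono[of "{..<n}" Bad] unfolding Bad_def by auto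
  show ?thesis
  proof (cases "Bad = {}")
    case True
    then have E: "{X \<in> space (MXs n D). real (KK (Suc i)) \<le> 2 * real (Lc i X)} = {}"
      using K2 unfolding K_def Lc_def by auto
    show ?thesis unfolding E by (metis exp_ge_zero measure_empty)
  next
    case False
    define q where "q = \<delta>' ^ Suc i"
    define s where "s = real K / 2 - real (card Bad) * q"
    have pq: "real n * q \<le> real K / 4"
    proof -
      have "q \<le> (pp / 8) ^ Suc i" unfolding q_def using dp \<delta>' by (intro power_mono) auto
      also have "\<dots> = pp ^ Suc i / 8 ^ Suc i" by (simp add: power_divide)
      also have "\<dots> \<le> pp ^ Suc i / 8"
      proof -
        have "(8::real) \<le> 8 ^ Suc i" using one_le_power[of "8::real" i] by simp
        then show ?thesis by (rule divide_left_mono) (use pp in auto)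
      qed
      finally have "real n * q \<le> real n * (pp ^ Suc i / 8)" by (rule mult_left_mono) simp
      also have "\<dots> = (pp ^ Suc i * real n) / 8" by simp
      also have "\<dots> \<le> (real K + 2) / 8"
        using round_size_lower[OF pp, of "Suc i" n] unfolding K_def KK_def by simp
      also have "\<dots> \<le> real K / 4" using K2 by simp
      finally show ?thesis .
    qed
    have q0: "q \<ge> 0" unfolding q_def using \<delta>' by simp
    have sK: "s \<ge> real K / 4"
    proof -
      have "real (card Bad) * q \<le> real n * q" using cardB q0 by (simp add: mult_right_mono)
      then show ?thesis unfolding s_def using pq by linarith
    qed
    have s0: "s \<ge> 0" using sK by simp
    have sub: "{X \<in> space (MXs n D). real (KK (Suc i)) \<le> 2 * real (Lc i X)} \<subseteq>
      {X \<in> space (MXs n D). real (card {a \<in> Bad. emp_mean X (round_offset \<alpha> \<delta>' \<epsilon> i) (round_samples \<alpha> \<delta>' \<epsilon> i) a \<ge> \<theta>})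
         \<ge> real (card Bad) * q + s}"
      unfolding s_def K_def Lc_def emp_def by auto
    have "measure (MXs n D) {X \<in> space (MXs n D). real (KK (Suc i)) \<le> 2 * real (Lc i X)}
      \<le> measure (MXs n D) {X \<in> space (MXs n D). real (card {a \<in> Bad. emp_mean X (round_offset \<alpha> \<delta>' \<epsilon> i) (round_samples \<alpha> \<delta>' \<epsilon> i) a \<ge> \<theta>})
         \<ge> real (card Bad) * q + s}"
      by (rule P.finite_measure_mono[OF sub]) (use meas_Lc in \<open>simp add: Lc_def emp_def, measurable\<close>)
    also have "\<dots> \<le> exp (- 2 * s\<^sup>2 / real (card Bad))"
      by (rule count_hoeffding[OF B n0 _ False _ s0])
         (use bad_lucky_bound in \<open>auto simp: Bad_def q_def emp_def\<close>)
    also have "\<dots> \<le> exp (- (real (KK TT))\<^sup>2 / (8 * real n))"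
    proof -
      have cB: "real (card Bad) > 0" using False unfolding Bad_def by (simp add: card_gt_0_iff)
      have "(real (KK TT))\<^sup>2 / (8 * real n) \<le> (real K / 4)\<^sup>2 * 2 / real n"
        using KKT n0 by (simp add: power2_eq_square field_simps mult_mono)
      also have "\<dots> \<le> s\<^sup>2 * 2 / real n" using sK K2 by (simp add: power_mono divide_right_mono)
      also have "\<dots> \<le> 2 * s\<^sup>2 / real (card Bad)"
        using cB cardB s0 by (simp add: frac_le)
      finally show ?thesis by simp
    qed
    finally show ?thesis .
  qed
qed

end

context aba_setup
begin

lemma learns_B:
  assumes dp: "\<delta>' \<le> pp / 8" and d2: "\<delta>' \<le> 1/2" and KT2: "KK TT \<ge> 2"
    and bound: "2 * \<delta>' + real TT * exp (- (real (KK TT))\<^sup>2 / (8 * real n))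
      + exp (- real (rand_set_size n) * real (KK TT) / (2 * real n)) + 2 * real n ^ 2 * \<delta>'' \<le> \<delta>"
  shows "aba_learns n \<alpha> \<delta>' \<delta>'' \<phi> \<epsilon> \<delta> D"
proof -
  obtain astar where as: "astar < n" "mu astar = mus" using best_exists(1) by blast
  define UL where "UL = (\<Union>i<TT. {X \<in> space (MXs n D). emp i X astar < \<theta>})"
  define LL where "LL = (\<Union>i<TT. {X \<in> space (MXs n D). real (KK (Suc i)) \<le> 2 * real (Lc i X)})"
  define BX where "BX = FinalBad \<union> UL \<union> LL"
  define BR where "BR = (if real (KK TT) < 2 * real (card Good) then {R. R \<inter> Good = {}} else {})"
  have ULs: "UL \<in> sets (MXs n D)" unfolding UL_def using meas_unlucky by auto
  have LLs: "LL \<in> sets (MXs n D)" unfolding LL_def using meas_L by auto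
  have BXs: "BX \<in> sets (MXs n D)" unfolding BX_def using FinalBad_sets ULs LLs by auto
  show ?thesis
  proof (rule learns_of_Succ, rule learn_from_events[OF B Succ_sets _ BXs])
    fix \<omega> assume om: "\<omega> \<in> space (aba_space n D)" "fst \<omega> \<in> rand_sets n" "fst \<omega> \<notin> BR" "snd \<omega> \<notin> BX"
    define X where "X = snd \<omega>"
    define R where "R = fst \<omega>"
    have X: "X \<in> space (MXs n D)" using space_split[OF om(1)] X_def by simp
    have nfb: "X \<notin> FinalBad" using om(4) unfolding BX_def X_def by auto
    have ul: "\<And>i. i < TT \<Longrightarrow> emp i X astar \<ge> \<theta>"
      using om(4) X unfolding BX_def UL_def X_def[symmetric] by (auto simp: not_less)
    have ll: "\<And>i. i < TT \<Longrightarrow> 2 * Lc i X < KK (Suc i)"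
    proof -
      fix i assume "i < TT"
      then have "\<not> real (KK (Suc i)) \<le> 2 * real (Lc i X)"
        using om(4) X unfolding BX_def LL_def X_def[symmetric] by auto
      then show "2 * Lc i X < KK (Suc i)" by linarith
    qed
    have RS: "R \<subseteq> final_set n \<alpha> \<delta>' \<phi> \<epsilon> R X" "SS X TT \<subseteq> final_set n \<alpha> \<delta>' \<phi> \<epsilon> R X"
      unfolding final_set_SS by auto
    have "\<exists>g. g \<in> Good \<and> g \<in> final_set n \<alpha> \<delta>' \<phi> \<epsilon> R X"
    proof (cases "real (KK TT) < 2 * real (card Good)")
      case True
      then have "R \<inter> Good \<noteq> {}" using om(3) unfolding BR_def R_def by auto
      then show ?thesis using RS by blast
    next
      case False
      then have gK: "2 * card Good \<le> KK TT" by linarith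
      have "astar \<in> SS X i" if "i \<le> TT" for i
        using that
      proof (induction i)
        case 0 then show ?case using as by (simp add: SS_def)
      next
        case (Suc i)
        then have i: "i < TT" by simp
        show ?case
        proof (rule ccontr)
          assume nin: "astar \<notin> SS X (Suc i)"
          have "KK (Suc i) \<le> card (SS X (Suc i) \<inter> Good) + Lc i X"
            by (rule det_round[OF _ ul[OF i] nin]) (use Suc i in simp)
          moreover have "card (SS X (Suc i) \<inter> Good) \<le> card Good"
            by (rule card_mono) (auto simp: Good_def)
          moreover have "KK TT \<le> KK (Suc i)" using K_antimono Suc by simp
          ultimately show False using ll[OF i] gK by linarith
        qed
      qed
      then have "astar \<in> SS X TT" by simp
      then show ?thesis using RS astar_Good[OF as] by blast
    qed
    then obtain g where g: "g \<in> Good" "g \<in> final_set n \<alpha> \<delta>' \<phi> \<epsilon> R X" by blast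
    have "arm_mean D (aba_output n \<alpha> \<delta>' \<delta>'' \<phi> \<epsilon> R X) \<ge> best_mean n D - \<epsilon>"
      by (rule det_final[OF _ nfb X g]) (use om R_def in simp)
    then show "\<omega> \<in> Succ" unfolding Succ_def R_def X_def using om by simp
  next
    interpret P: prob_space "MXs n D" by (rule prob_space_MXs[OF B])
    have u: "measure (MXs n D) UL \<le> 2 * \<delta>'"
    proof -
      have "measure (MXs n D) UL \<le> (\<Sum>i<TT. measure (MXs n D) {X \<in> space (MXs n D). emp i X astar < \<theta>})"
        unfolding UL_def by (rule measure_UNION_le) (use meas_unlucky in auto)
      also have "\<dots> \<le> (\<Sum>i<TT. \<delta>' ^ Suc i)"
        by (rule sum_mono) (use unlucky_bound[OF as(1)] as in \<open>simp add: \<theta>_def\<close>)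
      also have "\<dots> \<le> 2 * \<delta>'" by (rule geom_bound[OF d2])
      finally show ?thesis .
    qed
    have l: "measure (MXs n D) LL \<le> real TT * exp (- (real (KK TT))\<^sup>2 / (8 * real n))"
    proof -
      have "measure (MXs n D) LL \<le> (\<Sum>i<TT. measure (MXs n D) {X \<in> space (MXs n D). real (KK (Suc i)) \<le> 2 * real (Lc i X)})"
        unfolding LL_def by (rule measure_UNION_le) (use meas_L in auto)
      also have "\<dots> \<le> (\<Sum>i<TT. exp (- (real (KK TT))\<^sup>2 / (8 * real n)))"
        by (rule sum_mono) (use L_prob_B[OF dp _ KT2] in simp)
      also have "\<dots> = real TT * exp (- (real (KK TT))\<^sup>2 / (8 * real n))" by simp
      finally show ?thesis .
    qed
    have r: "measure (measure_pmf (pmf_of_set (rand_sets n))) BR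
        \<le> exp (- real (rand_set_size n) * real (KK TT) / (2 * real n))"
    proof (cases "real (KK TT) < 2 * real (card Good)")
      case True
      have "measure (measure_pmf (pmf_of_set (rand_sets n))) BR
         = measure (measure_pmf (pmf_of_set (rand_sets n))) {R. R \<inter> Good = {}}"
        unfolding BR_def using True by simp
      also have "\<dots> \<le> exp (- real (rand_set_size n) * real (card Good) / real n)"
        by (rule rand_miss[OF _ n0]) (auto simp: Good_def)
      also have "\<dots> \<le> exp (- real (rand_set_size n) * real (KK TT) / (2 * real n))"
      proof -
        have "real (rand_set_size n) * real (KK TT) / (2 * real n) \<le> real (rand_set_size n) * real (card Good) / real n"
          using True n0 by (simp add: field_simps mult_left_mono)
        then show ?thesis by simp
      qed
      finally show ?thesis .
    next
      case False then show ?thesis unfolding BR_def by simp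
    qed
    have "measure (MXs n D) BX \<le> measure (MXs n D) FinalBad + measure (MXs n D) UL + measure (MXs n D) LL"
    proof -
      have "measure (MXs n D) BX \<le> measure (MXs n D) (FinalBad \<union> UL) + measure (MXs n D) LL"
        unfolding BX_def by (intro measure_Un_le sets.Un FinalBad_sets ULs LLs)
      moreover have "measure (MXs n D) (FinalBad \<union> UL) \<le> measure (MXs n D) FinalBad + measure (MXs n D) UL"
        by (intro measure_Un_le FinalBad_sets ULs)
      ultimately show ?thesis by linarith
    qed
    then show "measure (measure_pmf (pmf_of_set (rand_sets n))) BR + measure (MXs n D) BX \<le> \<delta>"
      using final_bound u l r bound by linarith
  qed
qed

end

lemma sum_ip_closed:
  fixes x :: real
  shows "(\<Sum>i<N. real (Suc i) * x ^ i) * (1 - x)\<^sup>2 = 1 - real (Suc N) * x ^ N + real N * x ^ Suc N"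
proof (induction N)
  case 0 then show ?case by simp
next
  case (Suc N)
  have "(\<Sum>i<Suc N. real (Suc i) * x ^ i) * (1 - x)\<^sup>2
      = (\<Sum>i<N. real (Suc i) * x ^ i) * (1 - x)\<^sup>2 + real (Suc N) * x ^ N * (1 - x)\<^sup>2"
    by (simp add: algebra_simps)
  also have "\<dots> = 1 - real (Suc (Suc N)) * x ^ Suc N + real (Suc N) * x ^ Suc (Suc N)"
    unfolding Suc.IH by (simp add: power2_eq_square algebra_simps)
  finally show ?case .
qed

lemma sum_ip_bound:
  fixes x :: real
  assumes "0 \<le> x" "x < 1"
  shows "(\<Sum>i<N. real (Suc i) * x ^ i) \<le> 1 / (1 - x)\<^sup>2"
proof -
  have e: "- real (Suc N) * x ^ N + real N * x ^ Suc N = x ^ N * (real N * x - real N - 1)"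
    by (simp add: algebra_simps)
  have le0: "x ^ N * (real N * x - real N - 1) \<le> 0"
  proof -
    have "real N * x \<le> real N" using assms by (simp add: mult_left_le)
    then show ?thesis using assms by (simp add: mult_nonneg_nonpos)
  qed
  have "(\<Sum>i<N. real (Suc i) * x ^ i) * (1 - x)\<^sup>2 \<le> 1" using sum_ip_closed[where x=x and N=N] e le0 by linarith
  moreover have "(1 - x)\<^sup>2 > 0" using assms by simp
  ultimately show ?thesis by (simp add: field_simps)
qed

lemma rand_set_size_real: "real (rand_set_size n) \<le> real n powr (7/8) / 2"
proof -
  define x where "x = real n powr (7/8) / 2"
  have h: "0 \<le> \<lfloor>x\<rfloor>" unfolding x_def by simp
  then have "real (nat \<lfloor>x\<rfloor>) = real_of_int \<lfloor>x\<rfloor>" by simp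
  then show ?thesis unfolding rand_set_size_def x_def[symmetric] by linarith
qed

context aba_setup
begin

lemma cost_bound:
  assumes R: "R \<in> rand_sets n"
  shows "real (aba_samples n \<alpha> \<delta>' \<delta>'' \<phi> \<epsilon> R X)
    \<le> real n * (\<Sum>i<TT. real (Suc i) * pp ^ i) * (2 / (\<alpha> * \<epsilon>)\<^sup>2 * ln (1 / \<delta>') + 1)
      + (real n powr (3/4) / 2 + real n powr (7/8) / 2) * (2 / ((1 - \<alpha>) * \<epsilon>)\<^sup>2 * ln (real n / \<delta>'') + 1)"
proof -
  define U where "U = final_set n \<alpha> \<delta>' \<phi> \<epsilon> R X"
  define c0 where "c0 = nat \<lceil>2 / (\<alpha> * \<epsilon>)\<^sup>2 * ln (1 / \<delta>')\<rceil>"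
  define c1 where "c1 = 2 / ((1 - \<alpha>) * \<epsilon>)\<^sup>2"
  have c1: "c1 > 0" unfolding c1_def using \<alpha> \<epsilon> by simp
  have x0: "2 / (\<alpha> * \<epsilon>)\<^sup>2 * ln (1 / \<delta>') \<ge> 0" using \<delta>' by simp
  have c0: "real c0 \<le> 2 / (\<alpha> * \<epsilon>)\<^sup>2 * ln (1 / \<delta>') + 1" unfolding c0_def using x0 by linarith
  have eq: "aba_samples n \<alpha> \<delta>' \<delta>'' \<phi> \<epsilon> R X =
     (\<Sum>i<TT. card (SS X i) * round_samples \<alpha> \<delta>' \<epsilon> i) + card U * final_samples \<alpha> \<delta>'' \<epsilon> (card U)"
    unfolding aba_samples_def U_def SS_def TT_def pp_def Let_def ..
  have part1: "real (\<Sum>i<TT. card (SS X i) * round_samples \<alpha> \<delta>' \<epsilon> i)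
      \<le> real n * (\<Sum>i<TT. real (Suc i) * pp ^ i) * (2 / (\<alpha> * \<epsilon>)\<^sup>2 * ln (1 / \<delta>') + 1)"
  proof -
    have "real (\<Sum>i<TT. card (SS X i) * round_samples \<alpha> \<delta>' \<epsilon> i)
        = (\<Sum>i<TT. real (KK i) * (real (Suc i) * real c0))"
      using SS_props(2) unfolding round_samples_def c0_def by (simp add: algebra_simps)
    also have "\<dots> \<le> (\<Sum>i<TT. (pp ^ i * real n) * (real (Suc i) * (2 / (\<alpha> * \<epsilon>)\<^sup>2 * ln (1 / \<delta>') + 1)))"
    proof (rule sum_mono)
      fix i
      have "real (KK i) \<le> pp ^ i * real n" unfolding KK_def by (rule round_size_upper) (use pp in simp)
      moreover have "real (Suc i) * real c0 \<le> real (Suc i) * (2 / (\<alpha> * \<epsilon>)\<^sup>2 * ln (1 / \<delta>') + 1)"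
        using c0 by (simp add: mult_left_mono)
      ultimately show "real (KK i) * (real (Suc i) * real c0)
          \<le> (pp ^ i * real n) * (real (Suc i) * (2 / (\<alpha> * \<epsilon>)\<^sup>2 * ln (1 / \<delta>') + 1))"
        using pp x0 by (intro mult_mono) auto
    qed
    also have "\<dots> = real n * (\<Sum>i<TT. real (Suc i) * pp ^ i) * (2 / (\<alpha> * \<epsilon>)\<^sup>2 * ln (1 / \<delta>') + 1)"
      by (simp add: sum_distrib_left sum_distrib_right algebra_simps)
    finally show ?thesis .
  qed
  have Usub: "U \<subseteq> {..<n}" unfolding U_def final_set_SS
    using SS_props(1)[of X TT] R unfolding rand_sets_def by auto
  have finU: "finite U" using Usub finite_subset by blast
  have cUn: "card U \<le> n" using card_mono[OF _ Usub] by simp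
  have cU: "real (card U) \<le> real n powr (3/4) / 2 + real n powr (7/8) / 2"
  proof -
    have "card U \<le> card (SS X TT) + card R" unfolding U_def final_set_SS by (rule card_Un_le)
    also have "\<dots> = KK TT + rand_set_size n" using SS_props(2) R unfolding rand_sets_def by simp
    finally have "real (card U) \<le> real (KK TT) + real (rand_set_size n)" by linarith
    then show ?thesis using KT_le rand_set_size_real[of n] by linarith
  qed
  have lnn: "ln (real n / \<delta>'') \<ge> 0" using \<delta>'' n2 by simp
  have part2: "real (card U * final_samples \<alpha> \<delta>'' \<epsilon> (card U))
      \<le> (real n powr (3/4) / 2 + real n powr (7/8) / 2) * (c1 * ln (real n / \<delta>'') + 1)"
  proof (cases "card U = 0")
    case True
    have "0 \<le> (real n powr (3/4) / 2 + real n powr (7/8) / 2) * (c1 * ln (real n / \<delta>'') + 1)"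
      using c1 lnn by simp
    then show ?thesis using True by simp
  next
    case False
    then have s1: "card U \<ge> 1" by simp
    have "ln (real (card U) / \<delta>'') \<le> ln (real n / \<delta>'')"
      using s1 cUn \<delta>'' by (simp add: divide_right_mono)
    moreover have "ln (real (card U) / \<delta>'') \<ge> 0" using s1 \<delta>'' by simp
    ultimately have "real (final_samples \<alpha> \<delta>'' \<epsilon> (card U)) \<le> c1 * ln (real n / \<delta>'') + 1"
    proof -
      define y where "y = c1 * ln (real (card U) / \<delta>'')"
      have y0: "y \<ge> 0" unfolding y_def using c1 \<open>ln (real (card U) / \<delta>'') \<ge> 0\<close> by simp
      have "y \<le> c1 * ln (real n / \<delta>'')" unfolding y_def
        using c1 \<open>ln (real (card U) / \<delta>'') \<le> ln (real n / \<delta>'')\<close> by (simp add: mult_left_mono)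
      moreover have "real (nat \<lceil>y\<rceil>) \<le> y + 1" using y0 by linarith
      moreover have "final_samples \<alpha> \<delta>'' \<epsilon> (card U) = nat \<lceil>y\<rceil>"
        unfolding final_samples_def y_def c1_def ..
      ultimately show ?thesis by linarith
    qed
    moreover have "c1 * ln (real n / \<delta>'') + 1 \<ge> 0" using c1 lnn by simp
    ultimately show ?thesis using cU by (simp add: mult_mono)
  qed
  show ?thesis unfolding eq using part1 part2 unfolding c1_def by simp
qed

end

lemma one_minus_p0_pow4:
  fixes lam :: real assumes lam: "lam > 0"
  defines "p0 \<equiv> lam / (16 + 4 * lam)"
  shows "2 / (1 - p0) ^ 4 \<le> 2 + lam / 2" and "0 < p0" and "p0 \<le> 1/4"
proof -
  show p0: "0 < p0" unfolding p0_def using lam by simp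
  show p4: "p0 \<le> 1/4" unfolding p0_def using lam by (simp add: field_simps)
  have "(1 - p0) ^ 4 \<ge> 1 - 4 * p0"
  proof -
    have "1 + real 4 * (- p0) \<le> (1 + (- p0)) ^ 4"
      by (rule Bernoulli_inequality) (use p4 in simp)
    then show ?thesis by simp
  qed
  moreover have "1 - 4 * p0 = 4 / (4 + lam)" unfolding p0_def using lam by (simp add: field_simps)
  ultimately have h: "(1 - p0) ^ 4 \<ge> 4 / (4 + lam)" by simp
  have pos: "4 / (4 + lam) > 0" using lam by simp
  have "2 / (1 - p0) ^ 4 \<le> 2 / (4 / (4 + lam))"
  proof (rule divide_left_mono[OF h])
    have "(1 - p0) ^ 4 > 0" using p4 by simp
    then show "0 < (1 - p0) ^ 4 * (4 / (4 + lam))" using pos by simp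
  qed simp
  also have "\<dots> = 2 + lam / 2" using lam by (simp add: field_simps)
  finally show "2 / (1 - p0) ^ 4 \<le> 2 + lam / 2" .
qed

lemma cost_arith:
  fixes lam p0 x L e S :: real
  assumes lam: "lam > 0" and p0def: "p0 = lam / (16 + 4 * lam)" and x: "x \<ge> 1" and e: "0 < e" "e < 1"
    and L: "(2 + lam / 2) * ln 8 + 16 / 9 + 1 \<le> lam / 4 * L" and L0: "L > 0"
    and S: "0 \<le> S" "S \<le> 1 / (1 - p0)\<^sup>2"
    and ce: "x powr (-1/8) * (2 * (ln 8 + 3 * ln x) / p0\<^sup>2 + 1) \<le> 1"
    and cf: "x powr (-1/8) * (2 / p0\<^sup>2) \<le> lam / 4"
  shows "x * S * (2 / ((1 - p0) * e)\<^sup>2 * (ln 8 + L) + 1)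
      + (x powr (3/4) / 2 + x powr (7/8) / 2) * (2 / (p0 * e)\<^sup>2 * (ln 8 + 3 * ln x + L) + 1)
      \<le> (2 + lam) * x / e\<^sup>2 * L"
proof -
  have p4: "2 / (1 - p0) ^ 4 \<le> 2 + lam / 2" "0 < p0" "p0 \<le> 1/4"
    using one_minus_p0_pow4[OF lam] unfolding p0def by auto
  define u where "u = 1 / e\<^sup>2"
  have u1: "u \<ge> 1" unfolding u_def using e by (simp add: field_simps power_le_one)
  have q: "(1 - p0)\<^sup>2 > 0" using p4 by simp
  have q2: "1 / (1 - p0)\<^sup>2 \<le> 16 / 9"
  proof -
    have "(1 - p0)\<^sup>2 \<ge> (3/4)\<^sup>2" using p4 by (intro power_mono) auto
    then show ?thesis using q by (simp add: field_simps)
  qed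
  have l8: "ln 8 + L \<ge> 0" using L0 by simp
  have A1: "x * S * (2 / ((1 - p0) * e)\<^sup>2 * (ln 8 + L) + 1)
      \<le> x * (1 / (1 - p0)\<^sup>2) * (2 / ((1 - p0) * e)\<^sup>2 * (ln 8 + L) + 1)"
    using S x l8 by (intro mult_right_mono mult_left_mono) auto
  have A2: "x * (1 / (1 - p0)\<^sup>2) * (2 / ((1 - p0) * e)\<^sup>2 * (ln 8 + L) + 1)
      = x * u * (ln 8 + L) * (2 / (1 - p0) ^ 4) + x * (1 / (1 - p0)\<^sup>2)"
  proof -
    define r where "r = 1 - p0"
    have r: "r \<noteq> 0" unfolding r_def using p4 by simp
    have "x * (1 / r\<^sup>2) * (2 / (r * e)\<^sup>2 * (ln 8 + L) + 1) = x * u * (ln 8 + L) * (2 / r ^ 4) + x * (1 / r\<^sup>2)"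
      unfolding u_def using r e by (simp add: field_simps power2_eq_square power4_eq_xxxx)
    then show ?thesis unfolding r_def .
  qed
  have A3: "x * u * (ln 8 + L) * (2 / (1 - p0) ^ 4) \<le> x * u * (ln 8 + L) * (2 + lam / 2)"
    using p4 x u1 l8 by (intro mult_left_mono) auto
  have A4: "x * (1 / (1 - p0)\<^sup>2) \<le> x * u * (16/9)"
  proof -
    have "x * (1 / (1 - p0)\<^sup>2) \<le> x * (16/9)" using q2 x by (intro mult_left_mono) auto
    also have "\<dots> \<le> x * u * (16/9)" using u1 x by simp
    finally show ?thesis .
  qed
  have xp: "x powr (3/4) \<le> x powr (7/8)" using x by (intro powr_mono) auto
  have x78: "x powr (7/8) = x * x powr (-1/8)"
  proof -
    have "x powr (7/8) = x powr (1 + (-1/8))" by simp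
    also have "\<dots> = x powr 1 * x powr (-1/8)" by (rule powr_add)
    finally show ?thesis using x by simp
  qed
  define W where "W = 2 * (ln 8 + 3 * ln x) / p0\<^sup>2 + 1"
  have lnx: "ln x \<ge> 0" using x by simp
  have W0: "W \<ge> 0" unfolding W_def using lnx by simp
  have B1: "(x powr (3/4) / 2 + x powr (7/8) / 2) * (2 / (p0 * e)\<^sup>2 * (ln 8 + 3 * ln x + L) + 1)
      \<le> x powr (7/8) * (u * (W + L * (2 / p0\<^sup>2)))"
  proof -
    have f0: "2 / (p0 * e)\<^sup>2 * (ln 8 + 3 * ln x + L) + 1 \<ge> 0" using lnx L0 by simp
    have "(x powr (3/4) / 2 + x powr (7/8) / 2) * (2 / (p0 * e)\<^sup>2 * (ln 8 + 3 * ln x + L) + 1)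
       \<le> x powr (7/8) * (2 / (p0 * e)\<^sup>2 * (ln 8 + 3 * ln x + L) + 1)"
      using xp f0 by (intro mult_right_mono) auto
    also have "2 / (p0 * e)\<^sup>2 * (ln 8 + 3 * ln x + L) + 1 \<le> u * (W + L * (2 / p0\<^sup>2))"
    proof -
      have "2 / (p0 * e)\<^sup>2 * (ln 8 + 3 * ln x + L) + 1 = u * (W - 1 + L * (2 / p0\<^sup>2)) + 1"
        unfolding u_def W_def using p4 e by (simp add: field_simps power2_eq_square)
      also have "\<dots> \<le> u * (W + L * (2 / p0\<^sup>2))" using u1 by (simp add: algebra_simps)
      finally show ?thesis .
    qed
    then have "x powr (7/8) * (2 / (p0 * e)\<^sup>2 * (ln 8 + 3 * ln x + L) + 1) \<le> x powr (7/8) * (u * (W + L * (2 / p0\<^sup>2)))"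
      by (intro mult_left_mono) auto
    finally show ?thesis .
  qed
  have B2: "x powr (7/8) * (u * (W + L * (2 / p0\<^sup>2))) \<le> x * u * (1 + lam / 4 * L)"
  proof -
    have "x powr (7/8) * (u * (W + L * (2 / p0\<^sup>2))) = x * u * (x powr (-1/8) * W + L * (x powr (-1/8) * (2 / p0\<^sup>2)))"
      unfolding x78 by (simp add: algebra_simps)
    also have "\<dots> \<le> x * u * (1 + L * (lam / 4))"
    proof -
      have "x powr (-1/8) * W + L * (x powr (-1/8) * (2 / p0\<^sup>2)) \<le> 1 + L * (lam / 4)"
        using ce cf L0 unfolding W_def by (smt (verit) mult_left_mono)
      then show ?thesis using x u1 by (intro mult_left_mono) auto
    qed
    finally show ?thesis by (simp add: algebra_simps)
  qed
  have "x * S * (2 / ((1 - p0) * e)\<^sup>2 * (ln 8 + L) + 1)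
      + (x powr (3/4) / 2 + x powr (7/8) / 2) * (2 / (p0 * e)\<^sup>2 * (ln 8 + 3 * ln x + L) + 1)
     \<le> x * u * (ln 8 + L) * (2 + lam / 2) + x * u * (16/9) + x * u * (1 + lam / 4 * L)"
    using A1 A2 A3 A4 B1 B2 by linarith
  also have "\<dots> = x * u * ((2 + lam / 2) * L + lam / 4 * L + ((2 + lam / 2) * ln 8 + 16 / 9 + 1))"
    by (simp add: algebra_simps)
  also have "\<dots> \<le> x * u * ((2 + lam / 2) * L + lam / 4 * L + lam / 4 * L)"
  proof (rule mult_left_mono)
    show "(2 + lam / 2) * L + lam / 4 * L + ((2 + lam / 2) * ln 8 + 16 / 9 + 1)
       \<le> (2 + lam / 2) * L + lam / 4 * L + lam / 4 * L" using L by linarith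
  qed (use x u1 in auto)
  also have "\<dots> = (2 + lam) * x / e\<^sup>2 * L" unfolding u_def using e by (simp add: field_simps)
  finally show ?thesis .
qed

lemma cost_final:
  assumes S: "aba_setup n D (1 - p0) (\<delta> / 8) (\<delta> / (8 * real n ^ 2)) \<phi> \<epsilon>"
    and lam: "lam > 0" and p0: "p0 = lam / (16 + 4 * lam)" and \<delta>: "0 < \<delta>" "\<delta> < 1"
    and L: "(2 + lam / 2) * ln 8 + 16 / 9 + 1 \<le> lam / 4 * ln (1 / \<delta>)"
    and ce: "real n powr (-1/8) * (2 * (ln 8 + 3 * ln (real n)) / p0\<^sup>2 + 1) \<le> 1"
    and cf: "real n powr (-1/8) * (2 / p0\<^sup>2) \<le> lam / 4"
    and Sum: "(\<Sum>i<num_rounds n (\<delta> / 8 + \<phi>). real (Suc i) * (\<delta> / 8 + \<phi>) ^ i) \<le> 1 / (1 - p0)\<^sup>2"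
    and R: "R \<in> rand_sets n"
  shows "real (aba_samples n (1 - p0) (\<delta> / 8) (\<delta> / (8 * real n ^ 2)) \<phi> \<epsilon> R X)
     \<le> (2 + lam) * real n / \<epsilon>\<^sup>2 * ln (1 / \<delta>)"
proof -
  interpret S: aba_setup n D "1 - p0" "\<delta> / 8" "\<delta> / (8 * real n ^ 2)" \<phi> \<epsilon> by (rule S)
  have n: "real n \<ge> 2" using S.n2 by simp
  have L0: "ln (1 / \<delta>) > 0" using \<delta> by simp
  have e1: "ln (1 / (\<delta> / 8)) = ln 8 + ln (1 / \<delta>)"
  proof -
    have "1 / (\<delta> / 8) = 8 * (1 / \<delta>)" by simp
    then show ?thesis using \<delta> by (simp only: ln_mult) simp
  qed
  have e2: "ln (real n / (\<delta> / (8 * real n ^ 2))) = ln 8 + 3 * ln (real n) + ln (1 / \<delta>)"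
  proof -
    have eq: "real n / (\<delta> / (8 * real n ^ 2)) = (8 * real n ^ 3) * (1 / \<delta>)"
      using \<delta> n by (simp add: field_simps power2_eq_square power3_eq_cube)
    have p1: "8 * real n ^ 3 > 0" "1 / \<delta> > 0" "real n ^ 3 > 0" using n \<delta> by auto
    have "ln (real n / (\<delta> / (8 * real n ^ 2))) = ln (8 * real n ^ 3) + ln (1 / \<delta>)"
      unfolding eq using p1 by (simp only: ln_mult) simp
    also have "ln (8 * real n ^ 3) = ln 8 + ln (real n ^ 3)" using p1 by (simp only: ln_mult) simp
    finally have "ln (real n / (\<delta> / (8 * real n ^ 2))) = ln 8 + ln (real n ^ 3) + ln (1 / \<delta>)" .
    also have "ln (real n ^ 3) = 3 * ln (real n)" using n by (simp add: ln_realpow)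
    finally show ?thesis .
  qed
  have S0: "0 \<le> (\<Sum>i<S.TT. real (Suc i) * S.pp ^ i)" using S.pp by (intro sum_nonneg) auto
  have "real (aba_samples n (1 - p0) (\<delta> / 8) (\<delta> / (8 * real n ^ 2)) \<phi> \<epsilon> R X)
    \<le> real n * (\<Sum>i<S.TT. real (Suc i) * S.pp ^ i) * (2 / ((1 - p0) * \<epsilon>)\<^sup>2 * (ln 8 + ln (1 / \<delta>)) + 1)
      + (real n powr (3/4) / 2 + real n powr (7/8) / 2) * (2 / (p0 * \<epsilon>)\<^sup>2 * (ln 8 + 3 * ln (real n) + ln (1 / \<delta>)) + 1)"
    using S.cost_bound[OF R, of X] unfolding e1 e2 by simp
  also have "\<dots> \<le> (2 + lam) * real n / \<epsilon>\<^sup>2 * ln (1 / \<delta>)"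
  proof (rule cost_arith[OF lam p0 _ S.\<epsilon> L L0 S0 _ ce cf])
    show "1 \<le> real n" using n by simp
    show "(\<Sum>i<S.TT. real (Suc i) * S.pp ^ i) \<le> 1 / (1 - p0)\<^sup>2"
      using Sum unfolding S.TT_def S.pp_def .
  qed
  finally show ?thesis .
qed

lemma regimeA:
  assumes lam: "lam > 0" and p0: "p0 = lam / (16 + 4 * lam)" and n: "n \<ge> 2"
    and \<delta>: "0 < \<delta>" "\<delta> < 1" and nd: "real n ^ 2 * \<delta> \<le> 4"
    and L: "(2 + lam / 2) * ln 8 + 16 / 9 + 1 \<le> lam / 4 * ln (1 / \<delta>)"
    and ce: "real n powr (-1/8) * (2 * (ln 8 + 3 * ln (real n)) / p0\<^sup>2 + 1) \<le> 1"
    and cf: "real n powr (-1/8) * (2 / p0\<^sup>2) \<le> lam / 4"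
    and n34: "real n powr (3/4) \<ge> 6"
  shows "\<exists>\<alpha> \<delta>' \<delta>'' \<phi>. 0 < \<alpha> \<and> \<alpha> < 1 \<and> 0 < \<delta>' \<and> 0 < \<delta>'' \<and> 0 \<le> \<phi> \<and> \<delta>' + \<phi> < 1 \<and>
              (\<forall>\<epsilon> D. 0 < \<epsilon> \<and> \<epsilon> < 1 \<and> bandit_instance n D \<longrightarrow>
                 aba_learns n \<alpha> \<delta>' \<delta>'' \<phi> \<epsilon> \<delta> D \<and>
                 (\<forall>R \<in> rand_sets n. \<forall>X.
                    real (aba_samples n \<alpha> \<delta>' \<delta>'' \<phi> \<epsilon> R X)
                      \<le> (2 + lam) * real n / \<epsilon>\<^sup>2 * ln (1 / \<delta>)))"
proof -
  have p0b: "0 < p0" "p0 \<le> 1/4" using one_minus_p0_pow4[OF lam] unfolding p0 by auto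
  have rn: "real n \<ge> 2" using n by simp
  define q where "q = real n powr (-1/4) / 2"
  define \<phi> where "\<phi> = q - \<delta> / 8"
  have pp: "\<delta> / 8 + \<phi> = q" unfolding \<phi>_def by simp
  have q1: "q \<le> 1/2"
  proof -
    have "real n powr (-1/4) \<le> real n powr 0" using rn by (intro powr_mono) auto
    then show ?thesis unfolding q_def using rn by simp
  qed
  have q0: "q \<ge> 0" unfolding q_def by simp
  have \<phi>0: "\<phi> \<ge> 0"
  proof -
    have "real n powr (-2) \<le> real n powr (-1/4)" using rn by (intro powr_mono) auto
    moreover have "real n powr (-2) = 1 / real n ^ 2"
    proof -
      have "real n powr (-2) = inverse (real n powr 2)" by (rule powr_minus)
      also have "real n powr 2 = real n ^ 2" using rn by (subst powr_numeral) auto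
      finally show ?thesis by (simp add: divide_inverse)
    qed
    moreover have "\<delta> \<le> 4 / real n ^ 2" using nd rn by (simp add: field_simps)
    ultimately show ?thesis unfolding \<phi>_def q_def by (simp add: field_simps)
  qed
  have qn: "q * real n = real n powr (3/4) / 2"
  proof -
    have "real n powr (-1/4) * real n = real n powr (-1/4) * real n powr 1" using rn by simp
    also have "\<dots> = real n powr (-1/4 + 1)" by (rule powr_add[symmetric])
    also have "\<dots> = real n powr (3/4)" by simp
    finally show ?thesis unfolding q_def by simp
  qed
  have T1: "num_rounds n q = 1"
    unfolding num_rounds_def
  proof (rule Least_equality)
    show "real (round_size n q 1) \<le> real n powr (3/4) / 2"
      using round_size_upper[OF q0, of n 1] qn by simp
    fix y assume y: "real (round_size n q y) \<le> real n powr (3/4) / 2"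
    show "1 \<le> y"
    proof (rule ccontr)
      assume "\<not> 1 \<le> y"
      then have "y = 0" by simp
      with y have "real n \<le> real n powr (3/4) / 2" by simp
      moreover have "real n powr (3/4) \<le> real n powr 1" using rn by (intro powr_mono) auto
      ultimately show False using rn by simp
    qed
  qed
  have K1: "round_size n q 1 \<ge> 2"
  proof -
    have "round_size n q 1 = nat \<lfloor>real n powr (3/4) / 2\<rfloor>"
      using round_size_Suc[of n q 0] qn by (simp add: mult.commute)
    then show ?thesis using n34 by linarith
  qed
  have \<delta>''1: "\<delta> / (8 * real n ^ 2) < 1"
  proof -
    have "real n ^ 2 \<ge> 1" using rn by (simp add: one_le_power)
    then have "\<delta> / (8 * real n ^ 2) \<le> \<delta> / 8" using \<delta> n by (intro divide_left_mono) auto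
    then show ?thesis using \<delta> by linarith
  qed
  show ?thesis
  proof (intro exI conjI allI impI ballI)
    show "0 < 1 - p0" "1 - p0 < 1" "0 < \<delta> / 8" "0 < \<delta> / (8 * real n ^ 2)" "0 \<le> \<phi>" "\<delta> / 8 + \<phi> < 1"
      using p0b \<delta> \<phi>0 pp q1 rn by auto
    fix \<epsilon> :: real and D :: "nat \<Rightarrow> real measure" assume h: "0 < \<epsilon> \<and> \<epsilon> < 1 \<and> bandit_instance n D"
    have S: "aba_setup n D (1 - p0) (\<delta> / 8) (\<delta> / (8 * real n ^ 2)) \<phi> \<epsilon>"
      by unfold_locales (use h n p0b \<delta> \<delta>''1 \<phi>0 pp q1 in auto)
    interpret S: aba_setup n D "1 - p0" "\<delta> / 8" "\<delta> / (8 * real n ^ 2)" \<phi> \<epsilon> by (rule S)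
    show "aba_learns n (1 - p0) (\<delta> / 8) (\<delta> / (8 * real n ^ 2)) \<phi> \<epsilon> \<delta> D"
    proof (rule S.learns_A)
      show "S.TT = 1" unfolding S.TT_def S.pp_def pp T1 ..
      show "2 \<le> S.KK 1" unfolding S.KK_def S.pp_def pp using K1 .
      have "real n * \<delta> = (real n ^ 2 * \<delta>) / real n" using rn by (simp add: power2_eq_square)
      also have "\<dots> \<le> 4 / real n" using nd rn by (intro divide_right_mono) auto
      also have "\<dots> \<le> 2" using rn by (simp add: field_simps)
      finally have "real n * \<delta> \<le> 2" .
      then show "real n * (\<delta> / 8) \<le> 1" by simp
      have "(real n * (\<delta> / 8))\<^sup>2 = (real n ^ 2 * \<delta>) * \<delta> / 64" by (simp add: power2_eq_square)
      also have "\<dots> \<le> 4 * \<delta> / 64" using nd \<delta> by (intro divide_right_mono mult_right_mono) auto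
      finally have "(real n * (\<delta> / 8))\<^sup>2 \<le> \<delta> / 16" by simp
      moreover have "2 * real n ^ 2 * (\<delta> / (8 * real n ^ 2)) = \<delta> / 4" using rn by simp
      ultimately show "\<delta> / 8 + (real n * (\<delta> / 8))\<^sup>2 + 2 * real n ^ 2 * (\<delta> / (8 * real n ^ 2)) \<le> \<delta>"
        using \<delta> by simp
    qed
    fix R :: "nat set" and X :: "nat \<times> nat \<Rightarrow> real" assume R: "R \<in> rand_sets n"
    show "real (aba_samples n (1 - p0) (\<delta> / 8) (\<delta> / (8 * real n ^ 2)) \<phi> \<epsilon> R X)
       \<le> (2 + lam) * real n / \<epsilon>\<^sup>2 * ln (1 / \<delta>)"
    proof (rule cost_final[OF S lam p0 \<delta> L ce cf _ R])
      have "(1 - p0)\<^sup>2 \<le> 1" using p0b by (simp add: power_le_one)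
      moreover have "(1 - p0)\<^sup>2 > 0" using p0b by simp
      ultimately have "1 \<le> 1 / (1 - p0)\<^sup>2" by (simp add: field_simps)
      then show "(\<Sum>i<num_rounds n (\<delta> / 8 + \<phi>). real (Suc i) * (\<delta> / 8 + \<phi>) ^ i) \<le> 1 / (1 - p0)\<^sup>2"
        unfolding pp T1 by simp
    qed
  qed
qed

lemma regimeB:
  assumes lam: "lam > 0" and p0: "p0 = lam / (16 + 4 * lam)" and n: "n \<ge> 2"
    and \<delta>: "0 < \<delta>" "\<delta> \<le> p0" and nd: "real n ^ 2 * \<delta> > 4"
    and L: "(2 + lam / 2) * ln 8 + 16 / 9 + 1 \<le> lam / 4 * ln (1 / \<delta>)"
    and ce: "real n powr (-1/8) * (2 * (ln 8 + 3 * ln (real n)) / p0\<^sup>2 + 1) \<le> 1"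
    and cf: "real n powr (-1/8) * (2 / p0\<^sup>2) \<le> lam / 4"
    and c: "p0 * real n powr (3/4) / 2 - 1 \<ge> 2"
    and g: "real n powr (7/8) / 2 - 1 \<ge> 0"
    and d: "real n * exp (- (p0 * real n powr (3/4) / 2 - 1)\<^sup>2 / (8 * real n))
        + exp (- (real n powr (7/8) / 2 - 1) * (p0 * real n powr (3/4) / 2 - 1) / (2 * real n)) \<le> 2 / (real n)\<^sup>2"
  shows "\<exists>\<alpha> \<delta>' \<delta>'' \<phi>. 0 < \<alpha> \<and> \<alpha> < 1 \<and> 0 < \<delta>' \<and> 0 < \<delta>'' \<and> 0 \<le> \<phi> \<and> \<delta>' + \<phi> < 1 \<and>
              (\<forall>\<epsilon> D. 0 < \<epsilon> \<and> \<epsilon> < 1 \<and> bandit_instance n D \<longrightarrow>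
                 aba_learns n \<alpha> \<delta>' \<delta>'' \<phi> \<epsilon> \<delta> D \<and>
                 (\<forall>R \<in> rand_sets n. \<forall>X.
                    real (aba_samples n \<alpha> \<delta>' \<delta>'' \<phi> \<epsilon> R X)
                      \<le> (2 + lam) * real n / \<epsilon>\<^sup>2 * ln (1 / \<delta>)))"
proof -
  have p0b: "0 < p0" "p0 \<le> 1/4" using one_minus_p0_pow4[OF lam] unfolding p0 by auto
  have rn: "real n \<ge> 2" using n by simp
  have \<delta>1: "\<delta> < 1" using \<delta> p0b by simp
  define \<phi> where "\<phi> = p0 - \<delta> / 8"
  have pp: "\<delta> / 8 + \<phi> = p0" unfolding \<phi>_def by simp
  have \<phi>0: "\<phi> \<ge> 0" unfolding \<phi>_def using \<delta> p0b by simp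
  have \<delta>''1: "\<delta> / (8 * real n ^ 2) < 1"
  proof -
    have "real n ^ 2 \<ge> 1" using rn by (simp add: one_le_power)
    then have "\<delta> / (8 * real n ^ 2) \<le> \<delta> / 8" using \<delta> n by (intro divide_left_mono) auto
    then show ?thesis using \<delta>1 by linarith
  qed
  define k where "k = p0 * real n powr (3/4) / 2 - 1"
  have k2: "k \<ge> 2" using c unfolding k_def by simp
  have r: "real (rand_set_size n) \<ge> real n powr (7/8) / 2 - 1"
    unfolding rand_set_size_def by linarith
  have small: "2 / (real n)\<^sup>2 < \<delta> / 2" using nd rn by (simp add: field_simps)
  show ?thesis
  proof (intro exI conjI allI impI ballI)
    show "0 < 1 - p0" "1 - p0 < 1" "0 < \<delta> / 8" "0 < \<delta> / (8 * real n ^ 2)" "0 \<le> \<phi>" "\<delta> / 8 + \<phi> < 1"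
      using p0b \<delta> \<phi>0 pp rn by auto
    fix \<epsilon> :: real and D :: "nat \<Rightarrow> real measure" assume h: "0 < \<epsilon> \<and> \<epsilon> < 1 \<and> bandit_instance n D"
    have S: "aba_setup n D (1 - p0) (\<delta> / 8) (\<delta> / (8 * real n ^ 2)) \<phi> \<epsilon>"
      by unfold_locales (use h n p0b \<delta> \<delta>1 \<delta>''1 \<phi>0 pp in auto)
    interpret S: aba_setup n D "1 - p0" "\<delta> / 8" "\<delta> / (8 * real n ^ 2)" \<phi> \<epsilon> by (rule S)
    have spp: "S.pp = p0" unfolding S.pp_def pp ..
    have KT: "real (S.KK S.TT) \<ge> k"
    proof -
      obtain j where j: "S.TT = Suc j" using S.T_pos by (cases S.TT) auto
      have "real (S.KK j) > real n powr (3/4) / 2" using S.K_gt[of j] j by simp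
      moreover have "real (S.KK (Suc j)) \<ge> p0 * real (S.KK j) - 1"
        unfolding S.KK_def round_size_Suc spp by linarith
      ultimately have "real (S.KK (Suc j)) \<ge> p0 * (real n powr (3/4) / 2) - 1"
        using p0b by (smt (verit) mult_strict_left_mono)
      then show ?thesis unfolding j k_def by simp
    qed
    have TTn: "S.TT \<le> n"
    proof (rule ccontr)
      assume "\<not> S.TT \<le> n"
      then have "real (S.KK n) > real n powr (3/4) / 2" using S.K_gt[of n] by simp
      moreover have "real n powr (3/4) \<ge> 1" using rn by (intro ge_one_powr_ge_zero) auto
      moreover have "real (S.KK n) \<le> p0 ^ n * real n"
        unfolding S.KK_def spp[symmetric] by (rule round_size_upper) (use S.pp in simp)
      moreover have "p0 ^ n * real n \<le> 1 / 2"
      proof -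
        have "p0 ^ n * real n \<le> (1/4) ^ n * real n" using p0b by (intro mult_right_mono power_mono) auto
        also have "\<dots> = real n / 4 ^ n" by (simp add: power_divide)
        also have "\<dots> \<le> 1 / 2"
        proof -
          have "real n < 2 ^ n" using less_exp[of n] by (metis of_nat_less_numeral_power_cancel_iff)
          moreover have "(2::real) ^ n \<ge> 2"
          proof -
            have "(2::real) ^ 1 \<le> 2 ^ n" by (rule power_increasing) (use n in auto)
            then show ?thesis by simp
          qed
          moreover have "(4::real) ^ n = 2 ^ n * 2 ^ n"
          proof -
            have "(4::real) ^ n = (2 * 2) ^ n" by simp
            then show ?thesis by (simp only: power_mult_distrib)
          qed
          ultimately have "2 * real n \<le> 4 ^ n"
          proof -
            assume a: "real n < 2 ^ n" "(2::real) \<le> 2 ^ n" "(4::real) ^ n = 2 ^ n * 2 ^ n"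
            have "2 * real n \<le> 2 * 2 ^ n" using a(1) by simp
            also have "\<dots> \<le> 2 ^ n * 2 ^ n" using a(2) by (intro mult_right_mono) auto
            finally show ?thesis using a(3) by simp
          qed
          then show ?thesis by (simp add: field_simps)
        qed
        finally show ?thesis .
      qed
      ultimately show False by simp
    qed
    show "aba_learns n (1 - p0) (\<delta> / 8) (\<delta> / (8 * real n ^ 2)) \<phi> \<epsilon> \<delta> D"
    proof (rule S.learns_B)
      show "\<delta> / 8 \<le> S.pp / 8" using \<delta> spp by simp
      show "\<delta> / 8 \<le> 1 / 2" using \<delta>1 by simp
      show "2 \<le> S.KK S.TT" using KT k2 by linarith
      have k0: "k \<ge> 0" using k2 by simp
      have e1: "real S.TT * exp (- (real (S.KK S.TT))\<^sup>2 / (8 * real n))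
          \<le> real n * exp (- k\<^sup>2 / (8 * real n))"
      proof (rule mult_mono)
        show "real S.TT \<le> real n" using TTn by simp
        have "k\<^sup>2 \<le> (real (S.KK S.TT))\<^sup>2" using KT k0 by (intro power_mono) auto
        then have "k\<^sup>2 / (8 * real n) \<le> (real (S.KK S.TT))\<^sup>2 / (8 * real n)" using rn by (intro divide_right_mono) auto
        then show "exp (- (real (S.KK S.TT))\<^sup>2 / (8 * real n)) \<le> exp (- k\<^sup>2 / (8 * real n))" by simp
      qed auto
      have e2: "exp (- real (rand_set_size n) * real (S.KK S.TT) / (2 * real n))
          \<le> exp (- (real n powr (7/8) / 2 - 1) * k / (2 * real n))"
      proof -
        have "(real n powr (7/8) / 2 - 1) * k \<le> real (rand_set_size n) * real (S.KK S.TT)"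
          using r KT g k0 by (intro mult_mono) auto
        then have "(real n powr (7/8) / 2 - 1) * k / (2 * real n) \<le> real (rand_set_size n) * real (S.KK S.TT) / (2 * real n)"
          using rn by (intro divide_right_mono) auto
        moreover have "- real (rand_set_size n) * real (S.KK S.TT) / (2 * real n)
            = - (real (rand_set_size n) * real (S.KK S.TT) / (2 * real n))" by simp
        moreover have "- (real n powr (7/8) / 2 - 1) * k / (2 * real n) = - ((real n powr (7/8) / 2 - 1) * k / (2 * real n))"
          by (simp only: minus_mult_left minus_divide_left)
        ultimately have "- real (rand_set_size n) * real (S.KK S.TT) / (2 * real n)
            \<le> - (real n powr (7/8) / 2 - 1) * k / (2 * real n)" by linarith
        then show ?thesis by simp
      qed
      have "2 * real n ^ 2 * (\<delta> / (8 * real n ^ 2)) = \<delta> / 4" using rn by simp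
      then show "2 * (\<delta> / 8) + real S.TT * exp (- (real (S.KK S.TT))\<^sup>2 / (8 * real n))
          + exp (- real (rand_set_size n) * real (S.KK S.TT) / (2 * real n))
          + 2 * real n ^ 2 * (\<delta> / (8 * real n ^ 2)) \<le> \<delta>"
        using e1 e2 d small unfolding k_def by linarith
    qed
    fix R :: "nat set" and X :: "nat \<times> nat \<Rightarrow> real" assume R: "R \<in> rand_sets n"
    show "real (aba_samples n (1 - p0) (\<delta> / 8) (\<delta> / (8 * real n ^ 2)) \<phi> \<epsilon> R X)
       \<le> (2 + lam) * real n / \<epsilon>\<^sup>2 * ln (1 / \<delta>)"
    proof (rule cost_final[OF S lam p0 _ \<delta>1 L ce cf _ R])
      show "0 < \<delta>" by fact
      show "(\<Sum>i<num_rounds n (\<delta> / 8 + \<phi>). real (Suc i) * (\<delta> / 8 + \<phi>) ^ i) \<le> 1 / (1 - p0)\<^sup>2"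
        unfolding pp by (rule sum_ip_bound) (use p0b in auto)
    qed
  qed
qed

theorem theorem2:
  fixes lam :: real
  assumes "lam > 0"
  shows "\<exists>\<delta>0 > 0. \<exists>n0 :: nat. \<forall>\<delta> n. 0 < \<delta> \<and> \<delta> < \<delta>0 \<and> n \<ge> n0 \<longrightarrow>
           (\<exists>\<alpha> \<delta>' \<delta>'' \<phi>. 0 < \<alpha> \<and> \<alpha> < 1 \<and> 0 < \<delta>' \<and> 0 < \<delta>'' \<and> 0 \<le> \<phi> \<and> \<delta>' + \<phi> < 1 \<and>
              (\<forall>\<epsilon> D. 0 < \<epsilon> \<and> \<epsilon> < 1 \<and> bandit_instance n D \<longrightarrow>
                 aba_learns n \<alpha> \<delta>' \<delta>'' \<phi> \<epsilon> \<delta> D \<and>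
                 (\<forall>R \<in> rand_sets n. \<forall>X.
                    real (aba_samples n \<alpha> \<delta>' \<delta>'' \<phi> \<epsilon> R X)
                      \<le> (2 + lam) * real n / \<epsilon>\<^sup>2 * ln (1 / \<delta>))))"
proof -
  have lam: "lam > 0" by fact
  define p0 where "p0 = lam / (16 + 4 * lam)"
  have p0b: "0 < p0" "p0 \<le> 1/4" using one_minus_p0_pow4[OF lam] unfolding p0_def by auto
  define C1 where "C1 = (2 + lam / 2) * ln 8 + 16 / 9 + 1"
  define \<delta>0 where "\<delta>0 = min p0 (exp (- 4 * C1 / lam))"
  have \<delta>0: "\<delta>0 > 0" unfolding \<delta>0_def using p0b by simp
  have p0pos: "p0 > 0" by (rule p0b(1))
  have ev1: "\<forall>\<^sub>F n in sequentially. real n powr (3/4) \<ge> 6" by real_asymp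
  have ev2: "\<forall>\<^sub>F n in sequentially. p0 * real n powr (3/4) / 2 - 1 \<ge> 2" using p0pos by real_asymp
  have ev3: "\<forall>\<^sub>F n in sequentially. real n powr (7/8) / 2 - 1 \<ge> 0" by real_asymp
  have ev4: "\<forall>\<^sub>F n in sequentially. real n * exp (- (p0 * real n powr (3/4) / 2 - 1)\<^sup>2 / (8 * real n))
        + exp (- (real n powr (7/8) / 2 - 1) * (p0 * real n powr (3/4) / 2 - 1) / (2 * real n)) \<le> 2 / (real n)\<^sup>2"
    using p0pos by real_asymp
  have ev5: "\<forall>\<^sub>F n in sequentially. real n powr (-1/8) * (2 * (ln 8 + 3 * ln (real n)) / p0\<^sup>2 + 1) \<le> 1"
    using p0pos by real_asymp
  have ev6: "\<forall>\<^sub>F n in sequentially. real n powr (-1/8) * (2 / p0\<^sup>2) \<le> lam / 4"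
    using p0pos lam by real_asymp
  have ev7: "\<forall>\<^sub>F n in sequentially. n \<ge> (2::nat)" by (rule eventually_ge_at_top)
  have "\<forall>\<^sub>F n in sequentially. real n powr (3/4) \<ge> 6 \<and> p0 * real n powr (3/4) / 2 - 1 \<ge> 2 \<and>
      real n powr (7/8) / 2 - 1 \<ge> 0 \<and>
      real n * exp (- (p0 * real n powr (3/4) / 2 - 1)\<^sup>2 / (8 * real n))
        + exp (- (real n powr (7/8) / 2 - 1) * (p0 * real n powr (3/4) / 2 - 1) / (2 * real n)) \<le> 2 / (real n)\<^sup>2 \<and>
      real n powr (-1/8) * (2 * (ln 8 + 3 * ln (real n)) / p0\<^sup>2 + 1) \<le> 1 \<and>
      real n powr (-1/8) * (2 / p0\<^sup>2) \<le> lam / 4 \<and> n \<ge> 2"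
    using ev1 ev2 ev3 ev4 ev5 ev6 ev7 by (intro eventually_conj) auto
  then obtain N where N: "\<And>n. n \<ge> N \<Longrightarrow> real n powr (3/4) \<ge> 6 \<and> p0 * real n powr (3/4) / 2 - 1 \<ge> 2 \<and>
      real n powr (7/8) / 2 - 1 \<ge> 0 \<and>
      real n * exp (- (p0 * real n powr (3/4) / 2 - 1)\<^sup>2 / (8 * real n))
        + exp (- (real n powr (7/8) / 2 - 1) * (p0 * real n powr (3/4) / 2 - 1) / (2 * real n)) \<le> 2 / (real n)\<^sup>2 \<and>
      real n powr (-1/8) * (2 * (ln 8 + 3 * ln (real n)) / p0\<^sup>2 + 1) \<le> 1 \<and>
      real n powr (-1/8) * (2 / p0\<^sup>2) \<le> lam / 4 \<and> n \<ge> 2"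
    unfolding eventually_sequentially by blast
  show ?thesis
  proof (rule exI[of _ \<delta>0], rule conjI[OF \<delta>0], rule exI[of _ N], intro allI impI)
    fix \<delta> :: real and n :: nat
    assume h: "0 < \<delta> \<and> \<delta> < \<delta>0 \<and> N \<le> n"
    have \<delta>: "0 < \<delta>" "\<delta> < \<delta>0" using h by auto
    note Nn = N[of n] 
    have Nc: "real n powr (3/4) \<ge> 6" "p0 * real n powr (3/4) / 2 - 1 \<ge> 2"
      "real n powr (7/8) / 2 - 1 \<ge> 0"
      "real n * exp (- (p0 * real n powr (3/4) / 2 - 1)\<^sup>2 / (8 * real n))
        + exp (- (real n powr (7/8) / 2 - 1) * (p0 * real n powr (3/4) / 2 - 1) / (2 * real n)) \<le> 2 / (real n)\<^sup>2"
      "real n powr (-1/8) * (2 * (ln 8 + 3 * ln (real n)) / p0\<^sup>2 + 1) \<le> 1"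
      "real n powr (-1/8) * (2 / p0\<^sup>2) \<le> lam / 4" "n \<ge> 2"
      using Nn h by auto
    have \<delta>p: "\<delta> \<le> p0" using \<delta> unfolding \<delta>0_def by simp
    have \<delta>1: "\<delta> < 1" using \<delta>p p0b by simp
    have Lc: "(2 + lam / 2) * ln 8 + 16 / 9 + 1 \<le> lam / 4 * ln (1 / \<delta>)"
    proof -
      have "\<delta> < exp (- 4 * C1 / lam)" using \<delta> unfolding \<delta>0_def by simp
      then have "ln \<delta> < - 4 * C1 / lam" using \<delta>(1) by (metis exp_less_cancel_iff exp_ln)
      then have "ln (1 / \<delta>) > 4 * C1 / lam" using \<delta>(1) by (simp add: ln_div)
      then have "lam / 4 * ln (1 / \<delta>) > lam / 4 * (4 * C1 / lam)" using lam by (intro mult_strict_left_mono) auto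
      then show ?thesis unfolding C1_def using lam by simp
    qed
    show "\<exists>\<alpha> \<delta>' \<delta>'' \<phi>. 0 < \<alpha> \<and> \<alpha> < 1 \<and> 0 < \<delta>' \<and> 0 < \<delta>'' \<and> 0 \<le> \<phi> \<and> \<delta>' + \<phi> < 1 \<and>
              (\<forall>\<epsilon> D. 0 < \<epsilon> \<and> \<epsilon> < 1 \<and> bandit_instance n D \<longrightarrow>
                 aba_learns n \<alpha> \<delta>' \<delta>'' \<phi> \<epsilon> \<delta> D \<and>
                 (\<forall>R \<in> rand_sets n. \<forall>X.
                    real (aba_samples n \<alpha> \<delta>' \<delta>'' \<phi> \<epsilon> R X)
                      \<le> (2 + lam) * real n / \<epsilon>\<^sup>2 * ln (1 / \<delta>)))"
    proof (cases "real n ^ 2 * \<delta> \<le> 4")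
      case True
      show ?thesis
        by (rule regimeA[OF lam p0_def Nc(7) \<delta>(1) \<delta>1 True Lc Nc(5) Nc(6) Nc(1)])
    next
      case False
      then have nd: "real n ^ 2 * \<delta> > 4" by simp
      show ?thesis
        by (rule regimeB[OF lam p0_def Nc(7) \<delta>(1) \<delta>p nd Lc Nc(5) Nc(6) Nc(2) Nc(3) Nc(4)])
    qed
  qed
qed

end
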